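(* Assume (RHS.1), (RHS.2), (BC.1), (BC.2), (OBS.1), and, if (RHS.2b) holds, that (M.1) holds for all parameters. Then for any choice of parameters $\mathfrak h=(h,\varepsilon,\theta)$ there exists a unique $u_{\mathfrak h}\in\mathbb V_h$ solving the discrete obstacle problem, and it satisfies $$\|u_{\mathfrak h}\|_{L^\infty(\Omega_h)}\le C\|f\|_{L^\infty(\Omega_h)}+\|\chi\|_{L^\infty(\Omega_h)}+\max_{z\in\mathcal N_h^b}|\tilde g_\varepsilon(z)|,$$ where $C>0$ is a constant.
   Context: Setting: $\Omega\subset\mathbb R^d$ ($d\ge1$) is a bounded domain with continuous boundary. For $r>0$, $\Omega^{(r)}=\{x\in\Omega:\operatorname{dist}(x,\partial\Omega)>r\}$. $\{\mathcal T_h\}_{h>0}$ is a family of meshes of closed simplices, $h=\max_T\operatorname{diam}T$, $\Omega_h$ the interior of the union of the simplices, with $\Omega^{(h)}\subset\Omega_h\subset\Omega$; $\mathcal N_h$ the set of vertices. $\mathbb V_h$: continuous piecewise linear functions on $\mathcal T_h$, hat basis $\{\hat\varphi_z\}$, Lagrange interpolant $\mathcal I_h$. Parameters $\mathfrak h=(h,\varepsilon,\theta)$, $\varepsilon\in[h,\operatorname{diam}\Omega]$, $0<\theta\le1$. $\mathcal N_h^I=\mathcal N_h\cap\Omega^{(2\varepsilon)}$, $\mathcal N_h^b=\mathcal N_h\setminus\mathcal N_h^I$. $\mathbb S_\theta$: finite symmetric subset of the unit sphere $\mathbb S$ such that each $v\in\mathbb S$ has $v_\theta\in\mathbb S_\theta$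 with $|v-v_\theta|\le\theta$. For $z\in\mathcal N_h^I$: $\mathcal N_{\mathfrak h}(z)=\{z\}\cup\{z+\varepsilon v_\theta:v_\theta\in\mathbb S_\theta\}$, $-\Delta^\diamond_{\infty,\mathfrak h}w(z)=\varepsilon^{-2}\big(2w(z)-\max_{x\in\mathcal N_{\mathfrak h}(z)}\mathcal I_hw(x)-\min_{x\in\mathcal N_{\mathfrak h}(z)}\mathcal I_hw(x)\big)$, $\widetilde{\mathcal N}_{\mathfrak h}(z)=\{z\}\cup\{z'\in\mathcal N_h:\exists v_\theta\in\mathbb S_\theta,\ \hat\varphi_{z'}(z+\varepsilon v_\theta)>0\}$. Assumptions: (RHS.1) $f\in C(\Omega)\cap L^\infty(\Omega)$. (RHS.2) either (RHS.2a) $\sup_\Omega f<0$ or $\inf_\Omega f>0$, or (RHS.2b) $f\equiv0$. (BC.1) $g\in C(\partial\Omega)$. (BC.2) for every $\varepsilon>0$ a function $\tilde g_\varepsilon\in C(\overline\Omega)$ is given such that, if $g\in C^{0,\alpha}(\partial\Omega)$ for some $\alpha\in[0,1]$, then $\tilde g_\varepsilon\in C^{0,\alpha}(\overline\Omega)$ and $\|g-\tilde g_\varepsilon\|_{L^\infty(\partial\Omega)}\le C\varepsilon^\alpha$. (OBS.1) $\chi\in C(\overline\Omega)$, $\chi<g$ on $\partial\Omega$. (M.1) for every nonempty $S\subset\mathcal N_h^I$ there are $z\in S$, $z'\in\mathcal N_h\setminus S$ with $z'\in\widetilde{\mathcal N}_{\mathfrak h}(z)$. Discrete obstacle problem: find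 $u_{\mathfrak h}\in\mathbb V_h$ with $\min\{-\Delta^\diamond_{\infty,\mathfrak h}u_{\mathfrak h}(z)-f(z),\,u_{\mathfrak h}(z)-\chi(z)\}=0$ for $z\in\mathcal N_h^I$ and $u_{\mathfrak h}(z)=\tilde g_\varepsilon(z)$ for $z\in\mathcal N_h^b$. *)

theory Defs
  imports "HOL-Analysis.Analysis"
begin

definition continuous_boundary :: "'a::euclidean_space set \<Rightarrow> bool" where
  "continuous_boundary \<Omega> \<longleftrightarrow>
     (\<forall>x\<in>frontier \<Omega>. \<exists>r>0. \<exists>e (\<gamma>::'a \<Rightarrow> real).
        norm e = 1 \<and> continuous_on UNIV \<gamma> \<and>
        (\<forall>y\<in>ball x r. y \<in> \<Omega> \<longleftrightarrow> y \<bullet> e < \<gamma> (y - (y \<bullet> e) *\<^sub>R e)))"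

definition inner_set :: "'a::euclidean_space set \<Rightarrow> real \<Rightarrow> 'a set" where
  "inner_set \<Omega> r = {x \<in> \<Omega>. infdist x (frontier \<Omega>) > r}"

text \<open>A (closed, nondegenerate) simplex is given by its vertex set.\<close>
definition simplex_vertices :: "'a::euclidean_space set \<Rightarrow> bool" where
  "simplex_vertices S \<longleftrightarrow> finite S \<and> \<not> affine_dependent S \<and> card S = DIM('a) + 1"

definition is_mesh :: "'a::euclidean_space set set \<Rightarrow> bool" where
  "is_mesh \<T> \<longleftrightarrow> finite \<T> \<and> \<T> \<noteq> {} \<and> (\<forall>S\<in>\<T>. simplex_vertices S) \<and>
     (\<forall>S1\<in>\<T>. \<forall>S2\<in>\<T>. convex hull S1 \<inter> convex hull S2 = convex hull (S1 \<inter> S2))"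

definition mesh_size :: "'a::euclidean_space set set \<Rightarrow> real" where
  "mesh_size \<T> = Max ((\<lambda>S. diameter (convex hull S)) ` \<T>)"

definition mesh_union :: "'a::euclidean_space set set \<Rightarrow> 'a set" where
  "mesh_union \<T> = (\<Union>S\<in>\<T>. convex hull S)"

definition mesh_domain :: "'a::euclidean_space set set \<Rightarrow> 'a set" where
  "mesh_domain \<T> = interior (mesh_union \<T>)"

definition nodes :: "'a::euclidean_space set set \<Rightarrow> 'a set" where
  "nodes \<T> = \<Union>\<T>"

definition P1 :: "'a::euclidean_space set set \<Rightarrow> ('a \<Rightarrow> real) set" where
  "P1 \<T> = {u. continuous_on (mesh_union \<T>) u \<and>
              (\<forall>S\<in>\<T>. \<exists>a b. \<forall>x\<in>convex hull S. u x = a \<bullet> x + b) \<and>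
              (\<forall>x. x \<notin> mesh_union \<T> \<longrightarrow> u x = 0)}"

definition interp :: "'a::euclidean_space set set \<Rightarrow> ('a \<Rightarrow> real) \<Rightarrow> 'a \<Rightarrow> real" where
  "interp \<T> w = (THE u. u \<in> P1 \<T> \<and> (\<forall>z\<in>nodes \<T>. u z = w z))"

definition hat :: "'a::euclidean_space set set \<Rightarrow> 'a \<Rightarrow> 'a \<Rightarrow> real" where
  "hat \<T> z = interp \<T> (\<lambda>z'. if z' = z then 1 else 0)"

definition stencil_dirs :: "'a::euclidean_space set \<Rightarrow> real \<Rightarrow> bool" where
  "stencil_dirs S\<theta> \<theta> \<longleftrightarrow> finite S\<theta> \<and> (\<forall>v\<in>S\<theta>. norm v = 1 \<and> - v \<in> S\<theta>) \<and>
     (\<forall>v. norm v = 1 \<longrightarrow> (\<exists>w\<in>S\<theta>. norm (v - w) \<le> \<theta>))"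

definition interior_nodes :: "'a::euclidean_space set \<Rightarrow> 'a set set \<Rightarrow> real \<Rightarrow> 'a set" where
  "interior_nodes \<Omega> \<T> \<epsilon> = nodes \<T> \<inter> inner_set \<Omega> (2 * \<epsilon>)"

definition boundary_nodes :: "'a::euclidean_space set \<Rightarrow> 'a set set \<Rightarrow> real \<Rightarrow> 'a set" where
  "boundary_nodes \<Omega> \<T> \<epsilon> = nodes \<T> - interior_nodes \<Omega> \<T> \<epsilon>"

definition stencil :: "real \<Rightarrow> 'a::euclidean_space set \<Rightarrow> 'a \<Rightarrow> 'a set" where
  "stencil \<epsilon> S\<theta> z = insert z ((\<lambda>v. z + \<epsilon> *\<^sub>R v) ` S\<theta>)"

definition disc_inf_lap ::
    "'a::euclidean_space set set \<Rightarrow> real \<Rightarrow> 'a set \<Rightarrow> ('a \<Rightarrow> real) \<Rightarrow> 'a \<Rightarrow> real" where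
  "disc_inf_lap \<T> \<epsilon> S\<theta> w z =
     (2 * w z - Max (interp \<T> w ` stencil \<epsilon> S\<theta> z) - Min (interp \<T> w ` stencil \<epsilon> S\<theta> z)) / \<epsilon>\<^sup>2"

definition ext_stencil :: "'a::euclidean_space set set \<Rightarrow> real \<Rightarrow> 'a set \<Rightarrow> 'a \<Rightarrow> 'a set" where
  "ext_stencil \<T> \<epsilon> S\<theta> z =
     insert z {z' \<in> nodes \<T>. \<exists>v\<in>S\<theta>. hat \<T> z' (z + \<epsilon> *\<^sub>R v) > 0}"

definition cond_M1 :: "'a::euclidean_space set \<Rightarrow> 'a set set \<Rightarrow> real \<Rightarrow> 'a set \<Rightarrow> bool" where
  "cond_M1 \<Omega> \<T> \<epsilon> S\<theta> \<longleftrightarrow>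
     (\<forall>S. S \<noteq> {} \<and> S \<subseteq> interior_nodes \<Omega> \<T> \<epsilon> \<longrightarrow>
        (\<exists>z\<in>S. \<exists>z'\<in>nodes \<T> - S. z' \<in> ext_stencil \<T> \<epsilon> S\<theta> z))"

text \<open>Discrete obstacle problem (gt = the boundary datum tilde g_epsilon).\<close>
definition disc_obstacle_sol ::
    "'a::euclidean_space set \<Rightarrow> 'a set set \<Rightarrow> real \<Rightarrow> 'a set \<Rightarrow> ('a \<Rightarrow> real) \<Rightarrow>
     ('a \<Rightarrow> real) \<Rightarrow> ('a \<Rightarrow> real) \<Rightarrow> ('a \<Rightarrow> real) \<Rightarrow> bool" where
  "disc_obstacle_sol \<Omega> \<T> \<epsilon> S\<theta> f obs gt u \<longleftrightarrow>
     u \<in> P1 \<T> \<and>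
     (\<forall>z\<in>interior_nodes \<Omega> \<T> \<epsilon>. min (disc_inf_lap \<T> \<epsilon> S\<theta> u z - f z) (u z - obs z) = 0) \<and>
     (\<forall>z\<in>boundary_nodes \<Omega> \<T> \<epsilon>. u z = gt z)"

definition holder_on :: "'a::metric_space set \<Rightarrow> real \<Rightarrow> ('a \<Rightarrow> real) \<Rightarrow> bool" where
  "holder_on S \<alpha> u \<longleftrightarrow> continuous_on S u \<and> bounded (u ` S) \<and>
     (\<exists>L. \<forall>x\<in>S. \<forall>y\<in>S. \<bar>u x - u y\<bar> \<le> L * dist x y powr \<alpha>)"

definition linf_norm :: "'a set \<Rightarrow> ('a \<Rightarrow> real) \<Rightarrow> real" where
  "linf_norm S u = (if S = {} then 0 else (SUP x\<in>S. \<bar>u x\<bar>))"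

definition max_abs :: "'a set \<Rightarrow> ('a \<Rightarrow> real) \<Rightarrow> real" where
  "max_abs S u = (if S = {} then 0 else Max ((\<lambda>x. \<bar>u x\<bar>) ` S))"

end

theory Submission
  imports Defs
begin

lemma linear_real_inner:
  fixes g :: "'a::euclidean_space \<Rightarrow> real"
  assumes "linear g"
  shows "\<exists>a. \<forall>x. g x = a \<bullet> x"
proof -
  have "g x = (\<Sum>b\<in>Basis. g b *\<^sub>R b) \<bullet> x" for x
  proof -
    have "g x = g (\<Sum>b\<in>Basis. (x \<bullet> b) *\<^sub>R b)" by (simp add: euclidean_representation)
    also have "\<dots> = (\<Sum>b\<in>Basis. (x \<bullet> b) * g b)"
      using assms by (simp add: linear_sum linear_scale)
    also have "\<dots> = (\<Sum>b\<in>Basis. g b *\<^sub>R b) \<bullet> x"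
      by (simp add: inner_sum_right inner_commute mult.commute)
    finally show ?thesis .
  qed
  thus ?thesis by blast
qed

lemma affine_interp_simplex:
  fixes S :: "'a::euclidean_space set"
  assumes fin: "finite S" and ind: "\<not> affine_dependent S" and ne: "S \<noteq> {}"
  shows "\<exists>a b. \<forall>s\<in>S. a \<bullet> s + b = w s"
proof -
  obtain s0 where s0: "s0 \<in> S" using ne by blast
  define B where "B = (\<lambda>x. -s0 + x) ` (S-{s0})"
  have indB: "\<not> dependent B"
    using ind affine_dependent_iff_dependent2[OF s0] unfolding B_def by simp
  obtain g :: "'a \<Rightarrow> real" where g: "linear g" "\<forall>x\<in>B. g x = w (x + s0) - w s0"
    using linear_independent_extend[OF indB, of "\<lambda>x. w (x + s0) - w s0"] by blast
  obtain a where a: "\<forall>x. g x = a \<bullet> x" using linear_real_inner[OF g(1)] by blast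
  have "\<forall>s\<in>S. a \<bullet> s + (w s0 - a \<bullet> s0) = w s"
  proof
    fix s assume s: "s \<in> S"
    show "a \<bullet> s + (w s0 - a \<bullet> s0) = w s"
    proof (cases "s = s0")
      case True thus ?thesis by simp
    next
      case False
      hence "-s0 + s \<in> B" using s unfolding B_def by blast
      hence "g (-s0 + s) = w (-s0 + s + s0) - w s0" by (rule bspec[OF g(2)])
      hence "g (-s0 + s) = w s - w s0" by simp
      hence "a \<bullet> (-s0 + s) = w s - w s0" using a by simp
      thus ?thesis by (simp add: inner_diff_right algebra_simps)
    qed
  qed
  thus ?thesis by blast
qed

lemma affine_comb:
  fixes a :: "'a::real_inner"
  assumes "finite S" "sum u S = 1"
  shows "a \<bullet> (\<Sum>s\<in>S. u s *\<^sub>R s) + b = (\<Sum>s\<in>S. u s * (a \<bullet> s + b))"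
proof -
  have "(\<Sum>s\<in>S. u s * (a \<bullet> s + b)) = (\<Sum>s\<in>S. u s * (a \<bullet> s)) + b * sum u S"
    by (simp add: algebra_simps sum.distrib sum_distrib_left)
  thus ?thesis using assms by (simp add: inner_sum_right)
qed

lemma affine_agree:
  fixes S :: "'a::real_inner set"
  assumes "finite S" "\<forall>s\<in>S. a \<bullet> s + b = a' \<bullet> s + b'" "x \<in> convex hull S"
  shows "a \<bullet> x + b = a' \<bullet> x + b'"
proof -
  obtain u where u: "\<forall>s\<in>S. 0 \<le> u s" "sum u S = 1" "(\<Sum>s\<in>S. u s *\<^sub>R s) = x"
    using assms(3) convex_hull_finite[OF assms(1)] by auto
  have "a \<bullet> x + b = (\<Sum>s\<in>S. u s * (a \<bullet> s + b))" using affine_comb[OF assms(1) u(2)] u(3) by simp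
  also have "\<dots> = (\<Sum>s\<in>S. u s * (a' \<bullet> s + b'))" using assms(2) by simp
  also have "\<dots> = a' \<bullet> x + b'" using affine_comb[OF assms(1) u(2)] u(3) by simp
  finally show ?thesis .
qed

lemma mesh_finite: "is_mesh T \<Longrightarrow> finite T" by (simp add: is_mesh_def)
lemma mesh_simplex: fixes S :: "'a::euclidean_space set" shows "is_mesh T \<Longrightarrow> S \<in> T \<Longrightarrow> finite S \<and> \<not> affine_dependent S \<and> card S = DIM('a) + 1"
  by (simp add: is_mesh_def simplex_vertices_def)
lemma nodes_finite:
  assumes "is_mesh T" shows "finite (nodes T)"
  unfolding nodes_def
proof (rule finite_Union)
  show "finite T" using assms by (rule mesh_finite)
  show "\<And>S. S \<in> T \<Longrightarrow> finite S" using assms mesh_simplex by blast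
qed

lemma P1_unique:
  assumes "is_mesh T" "u \<in> P1 T" "u' \<in> P1 T" "\<forall>z\<in>nodes T. u z = u' z"
  shows "u = u'"
proof
  fix x
  show "u x = u' x"
  proof (cases "x \<in> mesh_union T")
    case False
    have "u x = 0" using assms(2) False unfolding P1_def by blast
    moreover have "u' x = 0" using assms(3) False unfolding P1_def by blast
    ultimately show ?thesis by simp
  next
    case True
    then obtain S where S: "S \<in> T" "x \<in> convex hull S" unfolding mesh_union_def by blast
    have "\<exists>a b. \<forall>y\<in>convex hull S. u y = a \<bullet> y + b" using assms(2) S(1) unfolding P1_def by blast
    then obtain a b where ab: "\<forall>y\<in>convex hull S. u y = a \<bullet> y + b" by blast
    have "\<exists>a b. \<forall>y\<in>convex hull S. u' y = a \<bullet> y + b" using assms(3) S(1) unfolding P1_def by blast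
    then obtain a' b' where ab': "\<forall>y\<in>convex hull S. u' y = a' \<bullet> y + b'" by blast
    have "\<forall>s\<in>S. a \<bullet> s + b = a' \<bullet> s + b'"
    proof
      fix s assume s: "s \<in> S"
      have sh: "s \<in> convex hull S" using s hull_subset[of S convex] by (rule subsetD[rotated])
      have sn: "s \<in> nodes T" using s S(1) unfolding nodes_def by (rule UnionI[rotated])
      have "u s = a \<bullet> s + b" using ab sh by (rule bspec[elim_format]) simp
      moreover have "u' s = a' \<bullet> s + b'" using ab' sh by (rule bspec[elim_format]) simp
      moreover have "u s = u' s" using assms(4) sn by (rule bspec[elim_format]) simp
      ultimately show "a \<bullet> s + b = a' \<bullet> s + b'" by simp
    qed
    hence "a \<bullet> x + b = a' \<bullet> x + b'" using affine_agree[of S a b a' b' x] mesh_simplex[OF assms(1) S(1)] S(2) by simp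
    moreover have "u x = a \<bullet> x + b" using ab S(2) by (rule bspec[elim_format]) simp
    moreover have "u' x = a' \<bullet> x + b'" using ab' S(2) by (rule bspec[elim_format]) simp
    ultimately show ?thesis by simp
  qed
qed


lemma mesh_simplex_ne: fixes S :: "'a::euclidean_space set"
  assumes "is_mesh T" "S \<in> T" shows "S \<noteq> {}"
proof -
  have "card S = DIM('a) + 1" using mesh_simplex[OF assms] by blast
  thus ?thesis by auto
qed

lemma interp_exists:
  fixes T :: "'a::euclidean_space set set"
  assumes mesh: "is_mesh T"
  shows "\<exists>u. u \<in> P1 T \<and> (\<forall>z\<in>nodes T. u z = w z)"
proof -
  have "\<forall>S\<in>T. \<exists>ab. \<forall>s\<in>S. fst ab \<bullet> s + snd ab = w s"
  proof
    fix S assume S: "S \<in> T"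
    have "finite S" "\<not> affine_dependent S" using mesh_simplex[OF mesh S] by blast+
    then obtain a b where "\<forall>s\<in>S. a \<bullet> s + b = w s"
      using affine_interp_simplex mesh_simplex_ne[OF mesh S] by blast
    thus "\<exists>ab. \<forall>s\<in>S. fst ab \<bullet> s + snd ab = w s" by (intro exI[of _ "(a,b)"]) simp
  qed
  then obtain AB where AB: "\<forall>S\<in>T. \<forall>s\<in>S. fst (AB S) \<bullet> s + snd (AB S) = w s"
    by (rule bchoice[elim_format]) blast
  define A where "A S = fst (AB S)" for S
  define B where "B S = snd (AB S)" for S
  have AB': "\<And>S s. S \<in> T \<Longrightarrow> s \<in> S \<Longrightarrow> A S \<bullet> s + B S = w s"
    using AB unfolding A_def B_def by blast
  define sel where "sel x = (SOME S. S \<in> T \<and> x \<in> convex hull S)" for x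
  define u where "u x = (if x \<in> mesh_union T then A (sel x) \<bullet> x + B (sel x) else 0)" for x
  have key: "u x = A S \<bullet> x + B S" if S: "S \<in> T" and x: "x \<in> convex hull S" for S x
  proof -
    have xm: "x \<in> mesh_union T" using S x unfolding mesh_union_def by blast
    have "\<exists>S. S \<in> T \<and> x \<in> convex hull S" using S x by blast
    hence "sel x \<in> T \<and> x \<in> convex hull (sel x)" unfolding sel_def by (rule someI_ex)
    hence sel: "sel x \<in> T" "x \<in> convex hull (sel x)" by blast+
    have "convex hull S \<inter> convex hull (sel x) = convex hull (S \<inter> sel x)"
      using mesh S sel(1) unfolding is_mesh_def by blast
    hence xi: "x \<in> convex hull (S \<inter> sel x)" using x sel(2) by blast
    have fin: "finite (S \<inter> sel x)" using mesh_simplex[OF mesh S] by blast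
    have "\<forall>s\<in>S \<inter> sel x. A S \<bullet> s + B S = A (sel x) \<bullet> s + B (sel x)"
      using AB' S sel(1) by simp
    hence "A S \<bullet> x + B S = A (sel x) \<bullet> x + B (sel x)"
      using affine_agree[OF fin _ xi] by blast
    thus ?thesis unfolding u_def using xm by simp
  qed
  have "u \<in> P1 T"
    unfolding P1_def
  proof (intro CollectI conjI)
    have "continuous_on (\<Union>S\<in>T. convex hull S) u"
    proof (rule continuous_on_closed_Union)
      show "finite T" using mesh by (rule mesh_finite)
      fix S assume S: "S \<in> T"
      have "finite S" using mesh_simplex[OF mesh S] by blast
      thus "closed (convex hull S)" by (simp add: compact_imp_closed finite_imp_compact_convex_hull)
      have "continuous_on (convex hull S) (\<lambda>x. A S \<bullet> x + B S)" by (intro continuous_intros)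
      thus "continuous_on (convex hull S) u"
        by (rule continuous_on_eq) (simp add: key[OF S])
    qed
    thus "continuous_on (mesh_union T) u" unfolding mesh_union_def .
    show "\<forall>S\<in>T. \<exists>a b. \<forall>x\<in>convex hull S. u x = a \<bullet> x + b"
      using key by blast
    show "\<forall>x. x \<notin> mesh_union T \<longrightarrow> u x = 0" unfolding u_def by simp
  qed
  moreover have "\<forall>z\<in>nodes T. u z = w z"
  proof
    fix z assume "z \<in> nodes T"
    then obtain S where S: "S \<in> T" "z \<in> S" unfolding nodes_def by blast
    have "z \<in> convex hull S" using S(2) hull_subset[of S convex] by (rule subsetD[rotated])
    thus "u z = w z" using key[OF S(1)] AB'[OF S] by simp
  qed
  ultimately show ?thesis by blast
qed

lemma interp_spec:
  assumes "is_mesh T"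
  shows "interp T w \<in> P1 T \<and> (\<forall>z\<in>nodes T. interp T w z = w z)"
proof -
  obtain u where u: "u \<in> P1 T \<and> (\<forall>z\<in>nodes T. u z = w z)" using interp_exists[OF assms] by blast
  have "\<And>u'. u' \<in> P1 T \<and> (\<forall>z\<in>nodes T. u' z = w z) \<Longrightarrow> u' = u"
    using P1_unique[OF assms] u by (metis (no_types, lifting))
  hence "\<exists>!u. u \<in> P1 T \<and> (\<forall>z\<in>nodes T. u z = w z)" using u by blast
  thus ?thesis unfolding interp_def by (rule theI')
qed

lemma interp_P1: "is_mesh T \<Longrightarrow> interp T w \<in> P1 T" using interp_spec by blast
lemma interp_node: "is_mesh T \<Longrightarrow> z \<in> nodes T \<Longrightarrow> interp T w z = w z" using interp_spec by blast

lemma interp_cong: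
  assumes "\<forall>z\<in>nodes T. w z = w' z" shows "interp T w = interp T w'"
proof -
  have "(\<lambda>u. u \<in> P1 T \<and> (\<forall>z\<in>nodes T. u z = w z)) = (\<lambda>u. u \<in> P1 T \<and> (\<forall>z\<in>nodes T. u z = w' z))"
    using assms by auto
  thus ?thesis unfolding interp_def by simp
qed

lemma interp_P1_self:
  assumes "is_mesh T" "u \<in> P1 T" shows "interp T u = u"
  using P1_unique[OF assms(1) interp_P1[OF assms(1)] assms(2)] interp_node[OF assms(1)] by blast

lemma bary:
  fixes T :: "'a::euclidean_space set set"
  assumes mesh: "is_mesh T" and x: "x \<in> mesh_union T"
  shows "\<exists>S lam. S \<in> T \<and> finite S \<and> (\<forall>s\<in>S. 0 \<le> lam s) \<and> sum lam S = 1 \<and> (\<Sum>s\<in>S. lam s *\<^sub>R s) = x \<and>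
     (\<forall>w. interp T w x = (\<Sum>s\<in>S. lam s * w s))"
proof -
  obtain S where S: "S \<in> T" "x \<in> convex hull S" using x unfolding mesh_union_def by blast
  have fin: "finite S" using mesh_simplex[OF mesh S(1)] by blast
  obtain l where l: "\<forall>s\<in>S. 0 \<le> l s" "sum l S = 1" "(\<Sum>s\<in>S. l s *\<^sub>R s) = x"
    using S(2) convex_hull_finite[OF fin] by auto
  have "interp T w x = (\<Sum>s\<in>S. l s * w s)" for w
  proof -
    have "\<exists>a b. \<forall>y\<in>convex hull S. interp T w y = a \<bullet> y + b"
      using interp_P1[OF mesh] S(1) unfolding P1_def by blast
    then obtain a b where ab: "\<forall>y\<in>convex hull S. interp T w y = a \<bullet> y + b" by blast
    have "interp T w x = a \<bullet> x + b" using ab S(2) by blast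
    also have "\<dots> = (\<Sum>s\<in>S. l s * (a \<bullet> s + b))" using affine_comb[OF fin l(2)] l(3) by simp
    also have "\<dots> = (\<Sum>s\<in>S. l s * w s)"
    proof (rule sum.cong)
      fix s assume s: "s \<in> S"
      have "s \<in> convex hull S" using s hull_subset[of S convex] by (rule subsetD[rotated])
      hence "interp T w s = a \<bullet> s + b" using ab by blast
      moreover have "interp T w s = w s" using interp_node[OF mesh] s S(1) unfolding nodes_def by blast
      ultimately show "l s * (a \<bullet> s + b) = l s * w s" by simp
    qed simp
    finally show ?thesis .
  qed
  thus ?thesis using S(1) fin l by blast
qed


lemma S_sub_nodes: "S \<in> T \<Longrightarrow> S \<subseteq> nodes T" unfolding nodes_def by blast

lemma interp_mono_pt:
  fixes T :: "'a::euclidean_space set set"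
  assumes mesh: "is_mesh T" and x: "x \<in> mesh_union T" and le: "\<forall>y\<in>nodes T. u y \<le> w y"
  shows "interp T u x \<le> interp T w x"
proof -
  obtain S lam where S: "S \<in> T" "finite S" "\<forall>s\<in>S. 0 \<le> lam s" "sum lam S = 1"
     "\<forall>w. interp T w x = (\<Sum>s\<in>S. lam s * w s)" using bary[OF mesh x] by blast
  have "(\<Sum>s\<in>S. lam s * u s) \<le> (\<Sum>s\<in>S. lam s * w s)"
    using S(3) le S_sub_nodes[OF S(1)] by (intro sum_mono mult_left_mono) auto
  thus ?thesis using S(5) by simp
qed

lemma interp_affine_pt:
  fixes T :: "'a::euclidean_space set set"
  assumes mesh: "is_mesh T" and x: "x \<in> mesh_union T"
  shows "interp T (\<lambda>y. c * w y + d) x = c * interp T w x + d"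
proof -
  obtain S lam where S: "S \<in> T" "finite S" "\<forall>s\<in>S. 0 \<le> lam s" "sum lam S = 1"
     "\<forall>w. interp T w x = (\<Sum>s\<in>S. lam s * w s)" using bary[OF mesh x] by blast
  have "(\<Sum>s\<in>S. lam s * (c * w s + d)) = c * (\<Sum>s\<in>S. lam s * w s) + d * sum lam S"
    by (simp add: algebra_simps sum.distrib sum_distrib_left)
  thus ?thesis using S(4,5) by simp
qed

lemma Max_img_mono:
  fixes f g :: "'b \<Rightarrow> real"
  assumes "finite A" "A \<noteq> {}" "\<forall>x\<in>A. f x \<le> g x"
  shows "Max (f ` A) \<le> Max (g ` A)"
proof -
  have "\<forall>x\<in>A. f x \<le> Max (g ` A)"
    using assms by (meson Max_ge finite_imageI image_eqI order_trans)
  thus ?thesis using assms by (simp add: Max_le_iff)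
qed

lemma Min_img_mono:
  fixes f g :: "'b \<Rightarrow> real"
  assumes "finite A" "A \<noteq> {}" "\<forall>x\<in>A. f x \<le> g x"
  shows "Min (f ` A) \<le> Min (g ` A)"
proof -
  have "\<forall>x\<in>A. Min (f ` A) \<le> g x"
    using assms by (meson Min_le finite_imageI image_eqI order_trans)
  thus ?thesis using assms by (simp add: Min_ge_iff)
qed

lemma stencil_finite: "finite S\<theta> \<Longrightarrow> finite (stencil \<epsilon> S\<theta> z)"
  unfolding stencil_def by simp
lemma stencil_ne: "z \<in> stencil \<epsilon> S\<theta> z" unfolding stencil_def by simp

lemma op_mono:
  fixes T :: "'a::euclidean_space set set"
  assumes mesh: "is_mesh T" and eps: "\<epsilon> > 0" and fin: "finite S\<theta>"
    and st: "stencil \<epsilon> S\<theta> z \<subseteq> mesh_union T" and le: "\<forall>y\<in>nodes T. u y \<le> w y"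
  shows "disc_inf_lap T \<epsilon> S\<theta> u z \<ge> disc_inf_lap T \<epsilon> S\<theta> w z - 2 * (w z - u z) / \<epsilon>\<^sup>2"
proof -
  let ?St = "stencil \<epsilon> S\<theta> z"
  have fSt: "finite ?St" and nSt: "?St \<noteq> {}" using stencil_finite[OF fin] stencil_ne by blast+
  have pt: "\<forall>p\<in>?St. interp T u p \<le> interp T w p"
    using interp_mono_pt[OF mesh _ le] st by blast
  have "Max (interp T u ` ?St) \<le> Max (interp T w ` ?St)" by (rule Max_img_mono[OF fSt nSt pt])
  moreover have "Min (interp T u ` ?St) \<le> Min (interp T w ` ?St)" by (rule Min_img_mono[OF fSt nSt pt])
  ultimately have "2 * u z - Max (interp T u ` ?St) - Min (interp T u ` ?St) \<ge>
     (2 * w z - Max (interp T w ` ?St) - Min (interp T w ` ?St)) - 2 * (w z - u z)" by (smt (verit))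
  hence "(2 * u z - Max (interp T u ` ?St) - Min (interp T u ` ?St)) / \<epsilon>\<^sup>2 \<ge>
     ((2 * w z - Max (interp T w ` ?St) - Min (interp T w ` ?St)) - 2 * (w z - u z)) / \<epsilon>\<^sup>2"
    using eps by (intro divide_right_mono) auto
  thus ?thesis unfolding disc_inf_lap_def by (simp add: diff_divide_distrib)
qed

lemma op_affine:
  fixes T :: "'a::euclidean_space set set"
  assumes mesh: "is_mesh T" and fin: "finite S\<theta>" and c: "c > 0"
    and st: "stencil \<epsilon> S\<theta> z \<subseteq> mesh_union T"
  shows "disc_inf_lap T \<epsilon> S\<theta> (\<lambda>y. c * w y + d) z = c * disc_inf_lap T \<epsilon> S\<theta> w z"
proof -
  let ?St = "stencil \<epsilon> S\<theta> z"
  let ?g = "\<lambda>t::real. c * t + d"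
  have fSt: "finite ?St" and nSt: "?St \<noteq> {}" using stencil_finite[OF fin] stencil_ne by blast+
  have img: "interp T (\<lambda>y. c * w y + d) ` ?St = ?g ` (interp T w ` ?St)"
    unfolding image_image using interp_affine_pt[OF mesh] st by (intro image_cong) auto
  have mono: "mono ?g" using c by (auto simp: mono_def)
  have "Max (?g ` (interp T w ` ?St)) = ?g (Max (interp T w ` ?St))"
    using mono_Max_commute[OF mono] fSt nSt by simp
  moreover have "Min (?g ` (interp T w ` ?St)) = ?g (Min (interp T w ` ?St))"
    using mono_Min_commute[OF mono] fSt nSt by simp
  ultimately show ?thesis unfolding disc_inf_lap_def img by (simp add: algebra_simps)
qed


lemma mesh_size_pos:
  fixes T :: "'a::euclidean_space set set"
  assumes mesh: "is_mesh T" shows "mesh_size T > 0"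
proof -
  obtain S where S: "S \<in> T" using mesh unfolding is_mesh_def by blast
  have fin: "finite S" and cS: "card S = DIM('a) + 1" using mesh_simplex[OF mesh S] by blast+
  obtain a where a: "a \<in> S" using mesh_simplex_ne[OF mesh S] by blast
  have "card (S - {a}) = DIM('a)" using cS a fin by simp
  hence "S - {a} \<noteq> {}" using DIM_positive[where 'a='a] by (metis card.empty less_irrefl)
  then obtain b where b: "b \<in> S" "b \<noteq> a" by blast
  have bd: "bounded (convex hull S)" using fin by (simp add: finite_imp_bounded_convex_hull)
  have "a \<in> convex hull S" "b \<in> convex hull S" using a b(1) hull_subset[of S convex] by blast+
  hence "dist a b \<le> diameter (convex hull S)" using diameter_bounded_bound[OF bd] by blast
  moreover have "diameter (convex hull S) \<le> mesh_size T"
    unfolding mesh_size_def using mesh_finite[OF mesh] S by (intro Max_ge) auto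
  moreover have "dist a b > 0" using b by simp
  ultimately show ?thesis by linarith
qed

lemma stencil_point_in:
  fixes \<Omega> :: "'a::euclidean_space set"
  assumes z: "z \<in> inner_set \<Omega> (2 * \<epsilon>)" and eps: "\<epsilon> > 0" and h: "h \<le> \<epsilon>"
    and nv: "norm v = 1"
  shows "z + \<epsilon> *\<^sub>R v \<in> inner_set \<Omega> h"
proof -
  let ?p = "z + \<epsilon> *\<^sub>R v"
  have zO: "z \<in> \<Omega>" and zd: "infdist z (frontier \<Omega>) > 2 * \<epsilon>" using z unfolding inner_set_def by auto
  have dzp: "dist z ?p = \<epsilon>" using nv eps by (simp add: dist_norm)
  have pO: "?p \<in> \<Omega>"
  proof (rule ccontr)
    assume np: "?p \<notin> \<Omega>"
    have "closed_segment z ?p \<inter> \<Omega> \<noteq> {}" using zO by blast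
    moreover have "closed_segment z ?p - \<Omega> \<noteq> {}" using np by blast
    ultimately have "closed_segment z ?p \<inter> frontier \<Omega> \<noteq> {}"
      by (intro connected_Int_frontier) auto
    then obtain y where y: "y \<in> closed_segment z ?p" "y \<in> frontier \<Omega>" by blast
    have "dist y z \<le> dist z ?p" using dist_in_closed_segment[OF y(1)] by blast
    hence "infdist z (frontier \<Omega>) \<le> \<epsilon>" using infdist_le[OF y(2), of z] dzp by (simp add: dist_commute)
    thus False using zd eps by linarith
  qed
  have "infdist z (frontier \<Omega>) \<le> infdist ?p (frontier \<Omega>) + dist z ?p" by (rule infdist_triangle)
  hence "infdist ?p (frontier \<Omega>) > h" using zd dzp h by linarith
  thus ?thesis using pO unfolding inner_set_def by blast
qed

lemma center_in:
  assumes z: "z \<in> inner_set \<Omega> (2 * \<epsilon>)" and eps: "\<epsilon> > 0" and h: "h \<le> \<epsilon>"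
  shows "z \<in> inner_set \<Omega> h"
  using z eps h unfolding inner_set_def by auto

lemma nodes_in_closure:
  fixes T :: "'a::euclidean_space set set"
  assumes mesh: "is_mesh T" and dom: "mesh_domain T \<subseteq> \<Omega>"
  shows "nodes T \<subseteq> closure \<Omega>"
proof
  fix s assume "s \<in> nodes T"
  then obtain S where S: "S \<in> T" "s \<in> S" unfolding nodes_def by blast
  have "card S = Suc DIM('a)" "\<not> affine_dependent S" using mesh_simplex[OF mesh S(1)] by auto
  hence ne: "interior (convex hull S) \<noteq> {}" using interior_convex_hull_eq_empty by blast
  have "s \<in> convex hull S" using S(2) hull_subset[of S convex] by blast
  also have "\<dots> \<subseteq> closure (convex hull S)" by (rule closure_subset)
  also have "\<dots> = closure (interior (convex hull S))"
    using convex_closure_interior[OF convex_convex_hull ne] by simp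
  also have "\<dots> \<subseteq> closure (mesh_domain T)"
  proof (rule closure_mono)
    have "convex hull S \<subseteq> mesh_union T" using S(1) unfolding mesh_union_def by blast
    thus "interior (convex hull S) \<subseteq> mesh_domain T" unfolding mesh_domain_def by (rule interior_mono)
  qed
  also have "\<dots> \<subseteq> closure \<Omega>" using dom by (rule closure_mono)
  finally show "s \<in> closure \<Omega>" .
qed


lemma norm_add_scaled_sq:
  fixes a v :: "'a::real_inner"
  shows "(norm (a + c *\<^sub>R v))\<^sup>2 = (norm a)\<^sup>2 + 2 * c * (a \<bullet> v) + c\<^sup>2 * (norm v)\<^sup>2"
  unfolding power2_norm_eq_inner by (simp add: inner_add_left inner_add_right inner_commute algebra_simps power2_eq_square)

lemma interp_concave_sq:
  fixes T :: "'a::euclidean_space set set"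
  assumes mesh: "is_mesh T" and x: "x \<in> mesh_union T" and A: "A \<ge> 0"
  shows "interp T (\<lambda>y. K - A * (norm (y - x0))\<^sup>2) x \<le> K - A * (norm (x - x0))\<^sup>2"
proof -
  obtain S lam where S: "S \<in> T" "finite S" "\<forall>s\<in>S. 0 \<le> lam s" "sum lam S = 1"
     "(\<Sum>s\<in>S. lam s *\<^sub>R s) = x"
     "\<forall>w. interp T w x = (\<Sum>s\<in>S. lam s * w s)" using bary[OF mesh x] by blast
  have Sne: "S \<noteq> {}" using S(4) by auto
  have "(\<Sum>s\<in>S. lam s *\<^sub>R (s - x0)) = x - x0"
    using S(4,5) by (simp add: scaleR_diff_right sum_subtractf scaleR_sum_left[symmetric])
  hence "norm (x - x0) \<le> (\<Sum>s\<in>S. norm (lam s *\<^sub>R (s - x0)))" by (metis norm_sum)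
  also have "\<dots> = (\<Sum>s\<in>S. lam s * norm (s - x0))" using S(3) by (intro sum.cong) auto
  finally have n1: "norm (x - x0) \<le> (\<Sum>s\<in>S. lam s * norm (s - x0))" .
  have "(\<Sum>s\<in>S. lam s * norm (s - x0))\<^sup>2 \<le> (\<Sum>s\<in>S. lam s * (norm (s - x0))\<^sup>2)"
    using convex_on_sum[OF S(2) Sne convex_power2, of lam "\<lambda>s. norm (s - x0)"] S(3,4) by simp
  with n1 have "(norm (x - x0))\<^sup>2 \<le> (\<Sum>s\<in>S. lam s * (norm (s - x0))\<^sup>2)"
    by (meson norm_ge_zero order_trans power_mono)
  hence "A * (norm (x - x0))\<^sup>2 \<le> A * (\<Sum>s\<in>S. lam s * (norm (s - x0))\<^sup>2)" using A by (rule mult_left_mono)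
  moreover have "(\<Sum>s\<in>S. lam s * (K - A * (norm (s - x0))\<^sup>2)) = K * sum lam S - A * (\<Sum>s\<in>S. lam s * (norm (s - x0))\<^sup>2)"
    by (simp add: algebra_simps sum_subtractf sum_distrib_left sum_distrib_right)
  ultimately show ?thesis using S(4,6) by simp
qed

lemma barrier:
  fixes T :: "'a::euclidean_space set set"
  assumes mesh: "is_mesh T" and eps: "\<epsilon> > 0" and fin: "finite S\<theta>" and ne: "S\<theta> \<noteq> {}"
    and sym: "\<forall>v\<in>S\<theta>. norm v = 1 \<and> - v \<in> S\<theta>"
    and st: "stencil \<epsilon> S\<theta> z \<subseteq> mesh_union T" and zn: "z \<in> nodes T" and A: "A \<ge> 0"
  shows "disc_inf_lap T \<epsilon> S\<theta> (\<lambda>y. K - A * (norm (y - x0))\<^sup>2) z \<ge> A"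
proof -
  let ?St = "stencil \<epsilon> S\<theta> z"
  define q where "q y = K - A * (norm (y - x0))\<^sup>2" for y
  let ?I = "interp T q"
  have fSt: "finite ?St" and nSt: "?St \<noteq> {}" using stencil_finite[OF fin] stencil_ne by blast+
  have J: "?I p \<le> q p" if "p \<in> ?St" for p
    using interp_concave_sq[OF mesh _ A] st that unfolding q_def by blast
  have Iz: "?I z = q z" using interp_node[OF mesh zn] .
  have MinI: "Min (?I ` ?St) \<le> q p" if "p \<in> ?St" for p
    using J[OF that] Min_le[OF finite_imageI[OF fSt], of "?I p"] that by force
  obtain p where p: "p \<in> ?St" "?I p = Max (?I ` ?St)"
    using Max_in[OF finite_imageI[OF fSt]] nSt by (metis (no_types, lifting) empty_is_image imageE)
  have stv: "z + \<epsilon> *\<^sub>R v \<in> ?St" if "v \<in> S\<theta>" for v unfolding stencil_def using that by blast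
  have key: "2 * q z - Max (?I ` ?St) - Min (?I ` ?St) \<ge> A * \<epsilon>\<^sup>2"
  proof (cases "p = z")
    case True
    obtain v0 where v0: "v0 \<in> S\<theta>" using ne by blast
    define v1 where "v1 = (if v0 \<bullet> (z - x0) \<ge> 0 then v0 else - v0)"
    have v1: "v1 \<in> S\<theta>" "norm v1 = 1" "(z - x0) \<bullet> v1 \<ge> 0"
      using v0 sym unfolding v1_def by (auto simp: inner_commute)
    have e1: "z + \<epsilon> *\<^sub>R v1 - x0 = (z - x0) + \<epsilon> *\<^sub>R v1" by (simp add: algebra_simps)
    have nn: "(norm (z + \<epsilon> *\<^sub>R v1 - x0))\<^sup>2 = (norm (z - x0))\<^sup>2 + 2 * \<epsilon> * ((z - x0) \<bullet> v1) + \<epsilon>\<^sup>2"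
      unfolding e1 norm_add_scaled_sq v1(2) by simp
    have "q z - q (z + \<epsilon> *\<^sub>R v1) = A * ((norm (z + \<epsilon> *\<^sub>R v1 - x0))\<^sup>2 - (norm (z - x0))\<^sup>2)"
      unfolding q_def by (simp add: algebra_simps)
    also have "\<dots> = A * (2 * \<epsilon> * ((z - x0) \<bullet> v1) + \<epsilon>\<^sup>2)" unfolding nn by simp
    also have "\<dots> \<ge> A * \<epsilon>\<^sup>2" using A eps v1(3) by (intro mult_left_mono) auto
    finally have "q z - q (z + \<epsilon> *\<^sub>R v1) \<ge> A * \<epsilon>\<^sup>2" .
    moreover have "Min (?I ` ?St) \<le> q (z + \<epsilon> *\<^sub>R v1)" using MinI stv[OF v1(1)] by blast
    moreover have "Max (?I ` ?St) = q z" using p True Iz by simp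
    ultimately show ?thesis by linarith
  next
    case False
    then obtain v where v: "v \<in> S\<theta>" "p = z + \<epsilon> *\<^sub>R v" using p(1) unfolding stencil_def by blast
    have mv: "- v \<in> S\<theta>" "norm v = 1" using sym v(1) by auto
    have M1: "Max (?I ` ?St) \<le> q (z + \<epsilon> *\<^sub>R v)" using p J v(2) by metis
    have M2: "Min (?I ` ?St) \<le> q (z + \<epsilon> *\<^sub>R (- v))" using MinI stv[OF mv(1)] by blast
    have e1: "z + \<epsilon> *\<^sub>R v - x0 = (z - x0) + \<epsilon> *\<^sub>R v" by (simp add: algebra_simps)
    have e2: "z + \<epsilon> *\<^sub>R (- v) - x0 = (z - x0) + \<epsilon> *\<^sub>R (- v)" by (simp add: algebra_simps)
    have n1: "(norm (z + \<epsilon> *\<^sub>R v - x0))\<^sup>2 = (norm (z - x0))\<^sup>2 + 2 * \<epsilon> * ((z - x0) \<bullet> v) + \<epsilon>\<^sup>2"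
      unfolding e1 norm_add_scaled_sq mv(2) by simp
    have n2: "(norm (z + \<epsilon> *\<^sub>R (- v) - x0))\<^sup>2 = (norm (z - x0))\<^sup>2 - 2 * \<epsilon> * ((z - x0) \<bullet> v) + \<epsilon>\<^sup>2"
      unfolding e2 norm_add_scaled_sq using mv(2) by simp
    have M3: "2 * q z - q (z + \<epsilon> *\<^sub>R v) - q (z + \<epsilon> *\<^sub>R (- v)) = 2 * A * \<epsilon>\<^sup>2"
      unfolding q_def n1 n2 by (simp add: algebra_simps)
    have "A * \<epsilon>\<^sup>2 \<le> 2 * A * \<epsilon>\<^sup>2" using A by simp
    thus ?thesis using M1 M2 M3 by linarith
  qed
  have "A = A * \<epsilon>\<^sup>2 / \<epsilon>\<^sup>2" using eps by simp
  also have "\<dots> \<le> (2 * q z - Max (?I ` ?St) - Min (?I ` ?St)) / \<epsilon>\<^sup>2"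
    using key eps by (intro divide_right_mono) auto
  finally show ?thesis unfolding disc_inf_lap_def q_def by simp
qed


lemma wavg_eq:
  fixes lam a :: "'b \<Rightarrow> real"
  assumes fin: "finite S" and nn: "\<forall>s\<in>S. 0 \<le> lam s" and one: "sum lam S = 1"
    and bd: "\<forall>s\<in>S. lam s > 0 \<longrightarrow> a s \<le> M"
  shows "(\<Sum>s\<in>S. lam s * a s) \<le> M"
    and "(\<Sum>s\<in>S. lam s * a s) \<ge> M \<Longrightarrow> \<forall>s\<in>S. lam s > 0 \<longrightarrow> a s = M"
proof -
  have tn: "\<forall>s\<in>S. 0 \<le> lam s * (M - a s)"
  proof
    fix s assume s: "s \<in> S"
    show "0 \<le> lam s * (M - a s)"
    proof (cases "lam s > 0")
      case True thus ?thesis using bd s by simp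
    next
      case False hence "lam s = 0" using nn s by force
      thus ?thesis by simp
    qed
  qed
  have eq: "(\<Sum>s\<in>S. lam s * (M - a s)) = M - (\<Sum>s\<in>S. lam s * a s)"
    using one by (simp add: algebra_simps sum_subtractf sum_distrib_left[symmetric])
  have "(\<Sum>s\<in>S. lam s * (M - a s)) \<ge> 0" using tn by (intro sum_nonneg) auto
  thus "(\<Sum>s\<in>S. lam s * a s) \<le> M" using eq by simp
  assume ge: "(\<Sum>s\<in>S. lam s * a s) \<ge> M"
  have "(\<Sum>s\<in>S. lam s * (M - a s)) = 0" using eq ge \<open>(\<Sum>s\<in>S. lam s * (M - a s)) \<ge> 0\<close> by simp
  hence z: "\<forall>s\<in>S. lam s * (M - a s) = 0"
    using sum_nonneg_eq_0_iff[OF fin, of "\<lambda>s. lam s * (M - a s)"] tn by simp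
  show "\<forall>s\<in>S. lam s > 0 \<longrightarrow> a s = M"
  proof (intro ballI impI)
    fix s assume s: "s \<in> S" and l: "lam s > 0"
    have "lam s * (M - a s) = 0" using z s by blast
    thus "a s = M" using l by simp
  qed
qed

lemma eps_limit:
  fixes a b K :: real
  assumes K: "K \<ge> 0" and H: "\<forall>\<delta>. 0 < \<delta> \<and> \<delta> < 1 \<longrightarrow> a \<le> b + \<delta> * K"
  shows "a \<le> b"
proof (rule ccontr)
  assume "\<not> a \<le> b"
  hence ab: "a - b > 0" by simp
  define \<delta> where "\<delta> = min (1/2) ((a - b) / (2 * (K + 1)))"
  have d0: "0 < \<delta>" unfolding \<delta>_def using ab K by simp
  have d1: "\<delta> < 1" unfolding \<delta>_def by simp
  have d2: "\<delta> \<le> (a - b) / (2 * (K + 1))" unfolding \<delta>_def by simp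
  have "\<delta> * K \<le> ((a - b) / (2 * (K + 1))) * K" using d2 K by (rule mult_right_mono)
  also have "\<dots> = (a - b) * (K / (2 * (K + 1)))" by simp
  also have "\<dots> < (a - b) * 1"
  proof (rule mult_strict_left_mono)
    show "K / (2 * (K + 1)) < 1" using K by (simp add: divide_less_eq)
  qed (rule ab)
  finally have "\<delta> * K < a - b" by simp
  moreover have "a \<le> b + \<delta> * K" using H d0 d1 by blast
  ultimately show False by linarith
qed

lemma linf_ge:
  assumes "\<forall>x\<in>S. \<bar>u x\<bar> \<le> Bd" "z \<in> S" shows "\<bar>u z\<bar> \<le> linf_norm S u"
proof -
  have bdd: "bdd_above ((\<lambda>x. \<bar>u x\<bar>) ` S)" using assms(1) by (intro bdd_aboveI2) blast
  have "\<bar>u z\<bar> \<le> (SUP x\<in>S. \<bar>u x\<bar>)" by (rule cSUP_upper[OF assms(2) bdd])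
  moreover have "S \<noteq> {}" using assms(2) by blast
  ultimately show ?thesis unfolding linf_norm_def by simp
qed

lemma linf_nonneg:
  assumes "\<forall>x\<in>S. \<bar>u x\<bar> \<le> Bd" shows "linf_norm S u \<ge> 0"
proof (cases "S = {}")
  case True thus ?thesis unfolding linf_norm_def by simp
next
  case False
  then obtain z where "z \<in> S" by blast
  hence "\<bar>u z\<bar> \<le> linf_norm S u" by (rule linf_ge[OF assms])
  moreover have "0 \<le> \<bar>u z\<bar>" by simp
  ultimately show ?thesis by linarith
qed

lemma linf_le:
  assumes "\<forall>x\<in>S. \<bar>u x\<bar> \<le> R" "R \<ge> 0" shows "linf_norm S u \<le> R"
proof (cases "S = {}")
  case True thus ?thesis unfolding linf_norm_def using assms by simp
next
  case False
  hence "(SUP x\<in>S. \<bar>u x\<bar>) \<le> R" by (rule cSUP_least) (use assms(1) in blast)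
  thus ?thesis unfolding linf_norm_def using False by simp
qed

lemma maxabs_ge:
  assumes "finite S" "z \<in> S" shows "\<bar>u z\<bar> \<le> max_abs S u"
proof -
  have "S \<noteq> {}" using assms(2) by blast
  moreover have "\<bar>u z\<bar> \<le> Max ((\<lambda>x. \<bar>u x\<bar>) ` S)" using assms by (intro Max_ge) auto
  ultimately show ?thesis unfolding max_abs_def by simp
qed

lemma maxabs_nonneg:
  assumes "finite S" shows "max_abs S u \<ge> 0"
proof (cases "S = {}")
  case True thus ?thesis unfolding max_abs_def by simp
next
  case False
  then obtain z where "z \<in> S" by blast
  hence "\<bar>u z\<bar> \<le> max_abs S u" by (rule maxabs_ge[OF assms])
  moreover have "0 \<le> \<bar>u z\<bar>" by simp
  ultimately show ?thesis by linarith
qed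

lemma lin_helper1:
  fixes Fu Fw f X Y :: real
  shows "Fw - X \<le> Fu \<Longrightarrow> f \<le> Fw \<Longrightarrow> X \<le> Y \<Longrightarrow> Y = (f - Fu) / 2 \<Longrightarrow> 0 < f - Fu \<Longrightarrow> False"
  by argo

locale dsetup =
  fixes \<Omega> :: "'a::euclidean_space set" and T :: "'a set set" and h \<epsilon> \<theta> :: real and S\<theta> :: "'a set"
  assumes mesh: "is_mesh T" and hdef: "h = mesh_size T" and inn: "inner_set \<Omega> h \<subseteq> mesh_domain T"
    and dom: "mesh_domain T \<subseteq> \<Omega>" and heps: "h \<le> \<epsilon>" and dirs: "stencil_dirs S\<theta> \<theta>"
begin

abbreviation "IN \<equiv> interior_nodes \<Omega> T \<epsilon>"
abbreviation "BN \<equiv> boundary_nodes \<Omega> T \<epsilon>"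
abbreviation "F \<equiv> disc_inf_lap T \<epsilon> S\<theta>"

lemma eps: "\<epsilon> > 0" using mesh_size_pos[OF mesh] hdef heps by linarith
lemma finS: "finite S\<theta>" using dirs unfolding stencil_dirs_def by blast
lemma symS: "\<forall>v\<in>S\<theta>. norm v = 1 \<and> - v \<in> S\<theta>" using dirs unfolding stencil_dirs_def by blast
lemma neS: "S\<theta> \<noteq> {}"
proof -
  obtain b :: 'a where "b \<in> Basis" using nonempty_Basis by blast
  hence "norm b = 1" by simp
  thus ?thesis using dirs unfolding stencil_dirs_def by blast
qed
lemma finN: "finite (nodes T)" using nodes_finite[OF mesh] .
lemma IN_nodes: "IN \<subseteq> nodes T" unfolding interior_nodes_def by blast
lemma BN_nodes: "BN \<subseteq> nodes T" unfolding boundary_nodes_def by blast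
lemma nodes_split: "y \<in> nodes T \<Longrightarrow> y \<in> IN \<or> y \<in> BN" unfolding boundary_nodes_def by blast
lemma IN_BN: "y \<in> IN \<Longrightarrow> y \<notin> BN" unfolding boundary_nodes_def by blast
lemma IN_dom: "z \<in> IN \<Longrightarrow> z \<in> mesh_domain T"
  using center_in[OF _ eps heps] inn unfolding interior_nodes_def by blast
lemma IN_Omega: "z \<in> IN \<Longrightarrow> z \<in> \<Omega>" using IN_dom dom by blast
lemma st_dom: "z \<in> IN \<Longrightarrow> stencil \<epsilon> S\<theta> z \<subseteq> mesh_domain T"
proof
  fix p assume z: "z \<in> IN" and p: "p \<in> stencil \<epsilon> S\<theta> z"
  have zi: "z \<in> inner_set \<Omega> (2 * \<epsilon>)" using z unfolding interior_nodes_def by blast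
  show "p \<in> mesh_domain T"
  proof (cases "p = z")
    case True thus ?thesis using IN_dom z by simp
  next
    case False
    then obtain v where v: "v \<in> S\<theta>" "p = z + \<epsilon> *\<^sub>R v" using p unfolding stencil_def by blast
    have "norm v = 1" using symS v(1) by blast
    thus ?thesis using stencil_point_in[OF zi eps heps] inn v(2) by blast
  qed
qed
lemma st_sub: "z \<in> IN \<Longrightarrow> stencil \<epsilon> S\<theta> z \<subseteq> mesh_union T"
  using st_dom interior_subset unfolding mesh_domain_def by blast

lemma mono_at:
  assumes "z \<in> IN" "\<forall>y\<in>nodes T. u y \<le> w y"
  shows "F u z \<ge> F w z - 2 * (w z - u z) / \<epsilon>\<^sup>2"
  using op_mono[OF mesh eps finS st_sub[OF assms(1)] assms(2)] .

lemma mono_eq_at: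
  assumes "z \<in> IN" "\<forall>y\<in>nodes T. u y \<le> w y + c" "u z = w z + c"
  shows "F u z \<ge> F w z"
proof -
  have "F u z \<ge> F (\<lambda>y. 1 * w y + c) z - 2 * ((1 * w z + c) - u z) / \<epsilon>\<^sup>2"
    using op_mono[OF mesh eps finS st_sub[OF assms(1)], of u "\<lambda>y. 1 * w y + c"] assms(2) by simp
  moreover have "F (\<lambda>y. 1 * w y + c) z = 1 * F w z"
    by (rule op_affine[OF mesh finS _ st_sub[OF assms(1)]]) simp
  ultimately show ?thesis using assms(3) by simp
qed

lemma sol_props:
  assumes "disc_obstacle_sol \<Omega> T \<epsilon> S\<theta> f obs g u"
  shows "u \<in> P1 T" "\<And>z. z \<in> IN \<Longrightarrow> F u z \<ge> f z" "\<And>z. z \<in> IN \<Longrightarrow> u z \<ge> obs z"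
    "\<And>z. z \<in> IN \<Longrightarrow> u z > obs z \<Longrightarrow> F u z = f z" "\<And>z. z \<in> BN \<Longrightarrow> u z = g z"
proof -
  have m: "\<And>z. z \<in> IN \<Longrightarrow> min (F u z - f z) (u z - obs z) = 0"
    using assms unfolding disc_obstacle_sol_def by blast
  show "u \<in> P1 T" using assms unfolding disc_obstacle_sol_def by blast
  show "\<And>z. z \<in> BN \<Longrightarrow> u z = g z" using assms unfolding disc_obstacle_sol_def by blast
  fix z assume z: "z \<in> IN"
  show "F u z \<ge> f z" using m[OF z] by (simp add: min_def split: if_splits)
  show "u z \<ge> obs z" using m[OF z] by (simp add: min_def split: if_splits)
  assume "u z > obs z"
  thus "F u z = f z" using m[OF z] by (simp add: min_def split: if_splits)
qed

lemma comparison: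
  assumes sol: "disc_obstacle_sol \<Omega> T \<epsilon> S\<theta> f obs g u"
    and wi: "\<forall>z\<in>IN. F w z > f z \<and> w z \<ge> obs z" and wb: "\<forall>z\<in>BN. w z \<ge> u z"
  shows "\<forall>y\<in>nodes T. u y \<le> w y"
proof (rule ccontr)
  assume "\<not> (\<forall>y\<in>nodes T. u y \<le> w y)"
  then obtain y0 where y0: "y0 \<in> nodes T" "u y0 > w y0" by force
  define M where "M = Max ((\<lambda>y. u y - w y) ` nodes T)"
  have fi: "finite ((\<lambda>y. u y - w y) ` nodes T)" using finN by simp
  have ne: "nodes T \<noteq> {}" using y0 by blast
  obtain z where z: "z \<in> nodes T" "u z - w z = M"
    using Max_in[OF fi] ne unfolding M_def by force
  have le: "\<forall>y\<in>nodes T. u y \<le> w y + M" using Max_ge[OF fi] unfolding M_def by force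
  have "M \<ge> u y0 - w y0" using Max_ge[OF fi] y0(1) unfolding M_def by blast
  hence Mp: "M > 0" using y0 by simp
  have zIN: "z \<in> IN" using nodes_split[OF z(1)] wb z(2) Mp by force
  have "u z > obs z" using wi zIN z(2) Mp by force
  hence "F u z = f z" using sol_props(4)[OF sol zIN] by blast
  moreover have "F u z \<ge> F w z" using mono_eq_at[OF zIN le] z(2) by simp
  ultimately show False using wi zIN by force
qed


lemma existence:
  fixes f obs g :: "'a \<Rightarrow> real"
  shows "\<exists>u. disc_obstacle_sol \<Omega> T \<epsilon> S\<theta> f obs g u"
proof -
  define SS where "SS = {w. (\<forall>z\<in>IN. F w z \<ge> f z \<and> w z \<ge> obs z) \<and> (\<forall>z\<in>BN. w z = g z)}"
  define A where "A = (\<Sum>z\<in>IN. \<bar>f z\<bar>)"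
  define K where "K = (\<Sum>y\<in>nodes T. \<bar>g y\<bar> + \<bar>obs y\<bar> + A * (norm (y - 0))\<^sup>2)"
  define q where "q y = K - A * (norm (y - 0))\<^sup>2" for y :: 'a
  define w0 where "w0 y = (if y \<in> BN then g y else q y)" for y
  have finIN: "finite IN" using finN IN_nodes finite_subset by blast
  have A0: "A \<ge> 0" unfolding A_def by (rule sum_nonneg) simp
  have fA: "f z \<le> A" if "z \<in> IN" for z
  proof -
    have "\<bar>f z\<bar> \<le> A" unfolding A_def using member_le_sum[of z IN "\<lambda>z. \<bar>f z\<bar>"] finIN that by simp
    thus ?thesis by simp
  qed
  have Kb: "\<bar>g y\<bar> + \<bar>obs y\<bar> + A * (norm (y - 0))\<^sup>2 \<le> K" if "y \<in> nodes T" for y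
    unfolding K_def using member_le_sum[of y "nodes T" "\<lambda>y. \<bar>g y\<bar> + \<bar>obs y\<bar> + A * (norm (y - 0))\<^sup>2"] finN that A0
    by simp
  have w0q: "\<forall>y\<in>nodes T. w0 y \<le> q y + 0"
  proof
    fix y assume y: "y \<in> nodes T"
    have "g y \<le> q y" using Kb[OF y] unfolding q_def by simp
    thus "w0 y \<le> q y + 0" unfolding w0_def by simp
  qed
  have "w0 \<in> SS" unfolding SS_def
  proof (intro CollectI conjI ballI)
    fix z assume z: "z \<in> IN"
    have wz: "w0 z = q z + 0" unfolding w0_def using IN_BN[OF z] by simp
    have "F w0 z \<ge> F q z" by (rule mono_eq_at[OF z w0q wz])
    moreover have "F q z \<ge> A" unfolding q_def
      by (rule barrier[OF mesh eps finS neS symS st_sub[OF z] _ A0]) (use z IN_nodes in blast)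
    ultimately show "F w0 z \<ge> f z" using fA[OF z] by linarith
    have "obs z \<le> q z" using Kb z IN_nodes unfolding q_def by force
    thus "w0 z \<ge> obs z" using wz by simp
  next
    fix z assume "z \<in> BN" thus "w0 z = g z" unfolding w0_def by simp
  qed
  hence SSne: "SS \<noteq> {}" by blast
  define u0 where "u0 y = Inf ((\<lambda>w. w y) ` SS)" for y
  define u where "u = interp T u0"
  have uu0: "u y = u0 y" if "y \<in> nodes T" for y unfolding u_def by (rule interp_node[OF mesh that])
  have bdd: "bdd_below ((\<lambda>w. w y) ` SS)" if "y \<in> nodes T" for y
  proof (cases "y \<in> IN")
    case True
    hence "\<forall>w\<in>SS. obs y \<le> w y" unfolding SS_def by blast
    thus ?thesis by (intro bdd_belowI2) blast
  next
    case False
    hence "y \<in> BN" using nodes_split[OF that] by blast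
    hence "\<forall>w\<in>SS. g y \<le> w y" unfolding SS_def by force
    thus ?thesis by (intro bdd_belowI2) blast
  qed
  have lower: "\<forall>y\<in>nodes T. u y \<le> w y" if "w \<in> SS" for w
  proof
    fix y assume y: "y \<in> nodes T"
    have "u0 y \<le> w y" unfolding u0_def using cInf_lower[OF imageI[OF that] bdd[OF y]] .
    thus "u y \<le> w y" using uu0[OF y] by simp
  qed
  have ubn: "u z = g z" if z: "z \<in> BN" for z
  proof -
    have zn: "z \<in> nodes T" using z BN_nodes by blast
    have "(\<lambda>w. w z) ` SS = {g z}" using SSne z unfolding SS_def by auto
    thus ?thesis using uu0[OF zn] unfolding u0_def by simp
  qed
  have uobs: "u z \<ge> obs z" if z: "z \<in> IN" for z
  proof -
    have zn: "z \<in> nodes T" using z IN_nodes by blast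
    have "obs z \<le> u0 z" unfolding u0_def
      by (rule cInf_greatest) (use SSne z in \<open>auto simp: SS_def\<close>)
    thus ?thesis using uu0[OF zn] by simp
  qed
  have uF: "F u z \<ge> f z" if z: "z \<in> IN" for z
  proof (rule ccontr)
    assume "\<not> F u z \<ge> f z"
    hence gap: "f z - F u z > 0" by simp
    have zn: "z \<in> nodes T" using z IN_nodes by blast
    define \<eta> where "\<eta> = (f z - F u z) * \<epsilon>\<^sup>2 / 4"
    have eta: "\<eta> > 0" unfolding \<eta>_def using gap eps by simp
    have "Inf ((\<lambda>w. w z) ` SS) < u0 z + \<eta>" using eta unfolding u0_def by simp
    then obtain w where w: "w \<in> SS" "w z < u0 z + \<eta>"
      using cInf_lessD[of "(\<lambda>w. w z) ` SS"] SSne by blast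
    have "F u z \<ge> F w z - 2 * (w z - u z) / \<epsilon>\<^sup>2" by (rule mono_at[OF z lower[OF w(1)]])
    moreover have "F w z \<ge> f z" using w(1) z unfolding SS_def by blast
    moreover have "2 * (w z - u z) / \<epsilon>\<^sup>2 \<le> 2 * \<eta> / \<epsilon>\<^sup>2"
      using w(2) uu0[OF zn] eps by (intro divide_right_mono) auto
    moreover have "2 * \<eta> / \<epsilon>\<^sup>2 = (f z - F u z) / 2" unfolding \<eta>_def using eps by simp
    ultimately show False using gap lin_helper1 by blast
  qed
  have uSS: "u \<in> SS" unfolding SS_def using uF uobs ubn by blast
  have eqn: "min (F u z - f z) (u z - obs z) = 0" if z: "z \<in> IN" for z
  proof (rule ccontr)
    assume "min (F u z - f z) (u z - obs z) \<noteq> 0"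
    hence pos: "F u z - f z > 0" "u z - obs z > 0" using uF[OF z] uobs[OF z] by (auto simp: min_def split: if_splits)
    have zn: "z \<in> nodes T" using z IN_nodes by blast
    define t where "t = min ((F u z - f z) * \<epsilon>\<^sup>2 / 2) (u z - obs z)"
    have t1: "t > 0" unfolding t_def using pos eps by simp
    have t2: "t \<le> (F u z - f z) * \<epsilon>\<^sup>2 / 2" unfolding t_def by (rule min.cobounded1)
    have t3: "t \<le> u z - obs z" unfolding t_def by (rule min.cobounded2)
    note t = t1 t2 t3
    define w' where "w' y = (if y = z then u z - t else u y)" for y
    have w'le: "\<forall>y\<in>nodes T. w' y \<le> u y + 0" unfolding w'_def using t by auto
    have "w' \<in> SS" unfolding SS_def
    proof (intro CollectI conjI ballI)
      fix y assume y: "y \<in> IN"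
      show "F w' y \<ge> f y"
      proof (cases "y = z")
        case True
        have "F w' z \<ge> F u z - 2 * (u z - w' z) / \<epsilon>\<^sup>2" by (rule mono_at[OF z]) (use w'le in simp)
        moreover have "2 * (u z - w' z) / \<epsilon>\<^sup>2 = 2 * t / \<epsilon>\<^sup>2" unfolding w'_def by simp
        moreover have "2 * t / \<epsilon>\<^sup>2 \<le> F u z - f z"
        proof -
          have "2 * t \<le> (F u z - f z) * \<epsilon>\<^sup>2" using t(2) by simp
          hence "2 * t / \<epsilon>\<^sup>2 \<le> (F u z - f z) * \<epsilon>\<^sup>2 / \<epsilon>\<^sup>2" using eps by (intro divide_right_mono) auto
          thus ?thesis using eps by simp
        qed
        ultimately have "F w' z \<ge> f z" by argo
        thus ?thesis using True by simp
      next
        case False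
        have "F w' y \<ge> F u y" by (rule mono_eq_at[OF y w'le]) (use False in \<open>simp add: w'_def\<close>)
        thus ?thesis using uF[OF y] by linarith
      qed
      show "w' y \<ge> obs y" using uobs[OF y] t unfolding w'_def by auto
    next
      fix y assume y: "y \<in> BN"
      hence "y \<noteq> z" using IN_BN[OF z] by blast
      thus "w' y = g y" using ubn[OF y] unfolding w'_def by simp
    qed
    hence "u z \<le> w' z" using lower zn by blast
    thus False using t unfolding w'_def by simp
  qed
  have "disc_obstacle_sol \<Omega> T \<epsilon> S\<theta> f obs g u"
    unfolding disc_obstacle_sol_def using interp_P1[OF mesh] eqn ubn unfolding u_def by blast
  thus ?thesis by blast
qed


lemma uniq_pos:
  assumes su: "disc_obstacle_sol \<Omega> T \<epsilon> S\<theta> f obs g u" and sv: "disc_obstacle_sol \<Omega> T \<epsilon> S\<theta> f obs g v"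
    and c: "c > 0" and fc: "\<forall>z\<in>IN. f z \<ge> c"
  shows "\<forall>y\<in>nodes T. u y \<le> v y"
proof
  fix y assume y: "y \<in> nodes T"
  define m where "m = Min (v ` nodes T)"
  have vm: "\<forall>x\<in>nodes T. m \<le> v x" unfolding m_def using finN by simp
  have "\<forall>\<delta>. 0 < \<delta> \<and> \<delta> < 1 \<longrightarrow> u y \<le> v y + \<delta> * (v y - m)"
  proof (intro allI impI)
    fix \<delta> :: real assume d: "0 < \<delta> \<and> \<delta> < 1"
    define w where "w x = (1 + \<delta>) * v x + (- \<delta> * m)" for x
    have wv: "w x = v x + \<delta> * (v x - m)" for x unfolding w_def by (simp add: algebra_simps)
    have wge: "w x \<ge> v x" if "x \<in> nodes T" for x using wv[of x] vm that d by simp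
    have "\<forall>x\<in>nodes T. u x \<le> w x"
    proof (rule comparison[OF su])
      show "\<forall>z\<in>IN. F w z > f z \<and> w z \<ge> obs z"
      proof
        fix z assume z: "z \<in> IN"
        have "F w z = (1 + \<delta>) * F v z" unfolding w_def
          by (rule op_affine[OF mesh finS _ st_sub[OF z]]) (use d in simp)
        moreover have "F v z \<ge> f z" using sol_props(2)[OF sv z] .
        moreover have "f z \<ge> c" using fc z by blast
        ultimately have "F w z \<ge> (1 + \<delta>) * f z" using d by (simp add: mult_left_mono)
        moreover have "\<delta> * f z > 0" using d c \<open>f z \<ge> c\<close> by simp
        ultimately have "F w z > f z" by (simp add: algebra_simps)
        moreover have "w z \<ge> obs z"
        proof -
          have "z \<in> nodes T" using z IN_nodes by blast
          thus ?thesis using wge[of z] sol_props(3)[OF sv z] by linarith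
        qed
        ultimately show "F w z > f z \<and> w z \<ge> obs z" by blast
      qed
      show "\<forall>z\<in>BN. w z \<ge> u z"
      proof
        fix z assume z: "z \<in> BN"
        have "u z = v z" using sol_props(5)[OF su z] sol_props(5)[OF sv z] by simp
        moreover have "z \<in> nodes T" using z BN_nodes by blast
        ultimately show "w z \<ge> u z" using wge[of z] by linarith
      qed
    qed
    hence "u y \<le> w y" using y by blast
    thus "u y \<le> v y + \<delta> * (v y - m)" by (simp add: wv)
  qed
  moreover have "v y - m \<ge> 0" using vm y by simp
  ultimately show "u y \<le> v y" using eps_limit by blast
qed

lemma uniq_neg:
  assumes su: "disc_obstacle_sol \<Omega> T \<epsilon> S\<theta> f obs g u" and sv: "disc_obstacle_sol \<Omega> T \<epsilon> S\<theta> f obs g v"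
    and c: "c < 0" and fc: "\<forall>z\<in>IN. f z \<le> c"
  shows "\<forall>y\<in>nodes T. u y \<le> v y"
proof
  fix y assume y: "y \<in> nodes T"
  define m where "m = Max (v ` nodes T)"
  have vm: "\<forall>x\<in>nodes T. v x \<le> m" unfolding m_def using finN by simp
  have "\<forall>\<delta>. 0 < \<delta> \<and> \<delta> < 1 \<longrightarrow> u y \<le> v y + \<delta> * (m - v y)"
  proof (intro allI impI)
    fix \<delta> :: real assume d: "0 < \<delta> \<and> \<delta> < 1"
    define w where "w x = (1 - \<delta>) * v x + (\<delta> * m)" for x
    have wv: "w x = v x + \<delta> * (m - v x)" for x unfolding w_def by (simp add: algebra_simps)
    have wge: "w x \<ge> v x" if "x \<in> nodes T" for x using wv[of x] vm that d by simp
    have "\<forall>x\<in>nodes T. u x \<le> w x"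
    proof (rule comparison[OF su])
      show "\<forall>z\<in>IN. F w z > f z \<and> w z \<ge> obs z"
      proof
        fix z assume z: "z \<in> IN"
        have "F w z = (1 - \<delta>) * F v z" unfolding w_def
          by (rule op_affine[OF mesh finS _ st_sub[OF z]]) (use d in simp)
        moreover have "F v z \<ge> f z" using sol_props(2)[OF sv z] .
        moreover have "f z \<le> c" using fc z by blast
        ultimately have "F w z \<ge> (1 - \<delta>) * f z" using d by (simp add: mult_left_mono)
        moreover have "\<delta> * f z < 0" using d c \<open>f z \<le> c\<close> by (simp add: mult_pos_neg)
        ultimately have "F w z > f z" by (simp add: algebra_simps)
        moreover have "w z \<ge> obs z"
        proof -
          have "z \<in> nodes T" using z IN_nodes by blast
          thus ?thesis using wge[of z] sol_props(3)[OF sv z] by linarith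
        qed
        ultimately show "F w z > f z \<and> w z \<ge> obs z" by blast
      qed
      show "\<forall>z\<in>BN. w z \<ge> u z"
      proof
        fix z assume z: "z \<in> BN"
        have "u z = v z" using sol_props(5)[OF su z] sol_props(5)[OF sv z] by simp
        moreover have "z \<in> nodes T" using z BN_nodes by blast
        ultimately show "w z \<ge> u z" using wge[of z] by linarith
      qed
    qed
    hence "u y \<le> w y" using y by blast
    thus "u y \<le> v y + \<delta> * (m - v y)" by (simp add: wv)
  qed
  moreover have "m - v y \<ge> 0" using vm y by simp
  ultimately show "u y \<le> v y" using eps_limit by blast
qed


lemma uniq_zero:
  assumes su: "disc_obstacle_sol \<Omega> T \<epsilon> S\<theta> f obs g u" and sv: "disc_obstacle_sol \<Omega> T \<epsilon> S\<theta> f obs g v"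
    and f0: "\<forall>z\<in>IN. f z = 0" and M1: "cond_M1 \<Omega> T \<epsilon> S\<theta>"
  shows "\<forall>y\<in>nodes T. u y \<le> v y"
proof (rule ccontr)
  assume "\<not> (\<forall>y\<in>nodes T. u y \<le> v y)"
  then obtain y0 where y0: "y0 \<in> nodes T" "u y0 > v y0" by auto
  define D where "D y = u y - v y" for y
  define M where "M = Max (D ` nodes T)"
  have fi: "finite (D ` nodes T)" using finN by simp
  have le: "\<forall>y\<in>nodes T. D y \<le> M" unfolding M_def using Max_ge[OF fi] by blast
  have Mpos: "M > 0" using le y0 unfolding D_def by fastforce
  define E where "E = {y\<in>nodes T. D y = M}"
  have Ene: "E \<noteq> {}"
  proof -
    have "M \<in> D ` nodes T" unfolding M_def using Max_in[OF fi] y0(1) by blast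
    thus ?thesis unfolding E_def by blast
  qed
  have finE: "finite E" unfolding E_def using finN by simp
  have E_IN: "E \<subseteq> IN"
  proof
    fix y assume y: "y \<in> E"
    hence yn: "y \<in> nodes T" "D y = M" unfolding E_def by auto
    show "y \<in> IN"
    proof (rule ccontr)
      assume "y \<notin> IN"
      hence "y \<in> BN" using nodes_split[OF yn(1)] by blast
      hence "D y = 0" unfolding D_def using sol_props(5)[OF su] sol_props(5)[OF sv] by simp
      thus False using yn(2) Mpos by simp
    qed
  qed
  define Um where "Um = Max (u ` E)"
  have uE: "\<forall>y\<in>E. u y \<le> Um" unfolding Um_def using finE by simp
  define Es where "Es = {y\<in>E. u y = Um}"
  have Esne: "Es \<noteq> {}"
  proof -
    have "Um \<in> u ` E" unfolding Um_def using Max_in finE Ene by blast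
    thus ?thesis unfolding Es_def by blast
  qed
  have Es_IN: "Es \<subseteq> IN" using E_IN unfolding Es_def by blast
  obtain x z' where x: "x \<in> Es" and z': "z' \<in> nodes T - Es" and zx: "z' \<in> ext_stencil T \<epsilon> S\<theta> x"
    using M1 Esne Es_IN unfolding cond_M1_def by blast
  have xIN: "x \<in> IN" using x Es_IN by blast
  have xn: "x \<in> nodes T" using xIN IN_nodes by blast
  have xE: "D x = M" "u x = Um" using x unfolding Es_def E_def by auto
  let ?St = "stencil \<epsilon> S\<theta> x"
  let ?Iu = "interp T u" and ?Iv = "interp T v"
  have stsub: "?St \<subseteq> mesh_union T" using st_sub[OF xIN] .
  have fSt: "finite ?St" and nSt: "?St \<noteq> {}" using stencil_finite[OF finS] stencil_ne by blast+
  have xSt: "x \<in> ?St" by (rule stencil_ne)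
  have supp: "(\<forall>s\<in>S. lam s > 0 \<longrightarrow> s \<in> E) \<and> ?Iu p \<le> Um"
    if S: "S \<in> T" "finite S" "\<forall>s\<in>S. 0 \<le> lam s" "sum lam S = 1"
      "\<forall>w. interp T w p = (\<Sum>s\<in>S. lam s * w s)" and ge: "?Iu p - ?Iv p \<ge> M" for S lam p
  proof -
    have Sn: "S \<subseteq> nodes T" using S_sub_nodes[OF S(1)] .
    have "?Iu p - ?Iv p = (\<Sum>s\<in>S. lam s * D s)"
      using S(5) unfolding D_def by (simp add: algebra_simps sum_subtractf)
    hence ge': "(\<Sum>s\<in>S. lam s * D s) \<ge> M" using ge by simp
    have bd: "\<forall>s\<in>S. lam s > 0 \<longrightarrow> D s \<le> M" using le Sn by blast
    have "\<forall>s\<in>S. lam s > 0 \<longrightarrow> D s = M" using wavg_eq(2)[OF S(2,3,4) bd ge'] .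
    hence sE: "\<forall>s\<in>S. lam s > 0 \<longrightarrow> s \<in> E" using Sn unfolding E_def by blast
    hence "\<forall>s\<in>S. lam s > 0 \<longrightarrow> u s \<le> Um" using uE by blast
    hence "(\<Sum>s\<in>S. lam s * u s) \<le> Um" using wavg_eq(1)[OF S(2,3,4)] by blast
    thus ?thesis using sE S(5) by simp
  qed
  have Iuv: "?Iu p \<le> ?Iv p + M" if p: "p \<in> ?St" for p
  proof -
    have pm: "p \<in> mesh_union T" using p stsub by blast
    have lv: "\<forall>y\<in>nodes T. u y \<le> 1 * v y + M"
    proof
      fix y assume "y \<in> nodes T"
      hence "D y \<le> M" using le by blast
      thus "u y \<le> 1 * v y + M" unfolding D_def by simp
    qed
    have "?Iu p \<le> interp T (\<lambda>y. 1 * v y + M) p"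
      by (rule interp_mono_pt[OF mesh pm lv])
    thus ?thesis using interp_affine_pt[OF mesh pm, of 1 v M] by simp
  qed
  define P where "P = Max (?Iu ` ?St)"
  define m where "m = Min (?Iu ` ?St)"
  define P' where "P' = Max (?Iv ` ?St)"
  define m' where "m' = Min (?Iv ` ?St)"
  have fiu: "finite (?Iu ` ?St)" "?Iu ` ?St \<noteq> {}" using fSt nSt by auto
  have fiv: "finite (?Iv ` ?St)" "?Iv ` ?St \<noteq> {}" using fSt nSt by auto
  have Pge: "\<forall>p\<in>?St. ?Iu p \<le> P" unfolding P_def using Max_ge[OF fiu(1)] by blast
  have mle: "\<forall>p\<in>?St. m \<le> ?Iu p" unfolding m_def using Min_le[OF fiu(1)] by blast
  have P'ge: "\<forall>p\<in>?St. ?Iv p \<le> P'" unfolding P'_def using Max_ge[OF fiv(1)] by blast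
  have m'le: "\<forall>p\<in>?St. m' \<le> ?Iv p" unfolding m'_def using Min_le[OF fiv(1)] by blast
  have h1: "P \<le> P' + M"
  proof -
    have "\<forall>a\<in>?Iu ` ?St. a \<le> P' + M" using Iuv P'ge by fastforce
    thus ?thesis unfolding P_def using Max_le_iff[OF fiu] by blast
  qed
  have h2: "m \<le> m' + M"
  proof -
    obtain q where q: "q \<in> ?St" "?Iv q = m'" unfolding m'_def using Min_in[OF fiv] by auto
    have "m \<le> ?Iu q" using mle q(1) by blast
    thus ?thesis using Iuv[OF q(1)] q(2) by linarith
  qed
  have uxo: "u x > obs x" using sol_props(3)[OF sv xIN] xE(1) Mpos unfolding D_def by linarith
  have Fu0: "F u x = 0" using sol_props(4)[OF su xIN uxo] f0 xIN by simp
  have Fv0: "F v x \<ge> 0" using sol_props(2)[OF sv xIN] f0 xIN by simp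
  have e2: "\<epsilon>\<^sup>2 > 0" using eps by simp
  have h3: "2 * u x - P - m = 0"
    using Fu0 e2 unfolding disc_inf_lap_def P_def m_def by simp
  have h4: "2 * v x - P' - m' \<ge> 0"
  proof -
    have "(2 * v x - P' - m') / \<epsilon>\<^sup>2 \<ge> 0" using Fv0 unfolding disc_inf_lap_def P'_def m'_def by simp
    thus ?thesis using e2 by (simp add: zero_le_divide_iff)
  qed
  have uxv: "u x = v x + M" using xE(1) unfolding D_def by simp
  have PP: "P = P' + M" and mm: "m = m' + M" using h1 h2 h3 h4 uxv by linarith+
  obtain p0 where p0: "p0 \<in> ?St" "?Iu p0 = P" unfolding P_def using Max_in[OF fiu] by auto
  have "?Iu p0 - ?Iv p0 \<ge> M" using p0 P'ge PP by fastforce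
  moreover obtain S lam where S: "S \<in> T" "finite S" "\<forall>s\<in>S. 0 \<le> lam s" "sum lam S = 1"
     "\<forall>w. interp T w p0 = (\<Sum>s\<in>S. lam s * w s)" using bary[OF mesh, of p0] p0(1) stsub by blast
  ultimately have "?Iu p0 \<le> Um" using supp by blast
  hence Pux: "P \<le> u x" using p0 xE(2) by simp
  have "?Iu x = u x" using interp_node[OF mesh xn] .
  hence "u x \<le> P" using Pge xSt by force
  hence Peq: "P = u x" using Pux by simp
  hence meq: "m = u x" using h3 by simp
  have allp: "?Iu p = u x \<and> ?Iv p = v x" if p: "p \<in> ?St" for p
  proof -
    have a: "?Iu p = u x" using Pge mle p Peq meq by (metis order_antisym)
    have "P' = v x" "m' = v x" using Peq meq PP mm uxv by simp_all
    hence b: "?Iv p = v x" using P'ge m'le p by (metis order_antisym)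
    show ?thesis using a b by blast
  qed
  have z'x: "z' \<noteq> x" using z' x by blast
  then obtain v0 where v0: "v0 \<in> S\<theta>" "hat T z' (x + \<epsilon> *\<^sub>R v0) > 0"
    using zx unfolding ext_stencil_def by blast
  define p where "p = x + \<epsilon> *\<^sub>R v0"
  have pSt: "p \<in> ?St" unfolding p_def stencil_def using v0(1) by blast
  obtain S2 lam2 where S2: "S2 \<in> T" "finite S2" "\<forall>s\<in>S2. 0 \<le> lam2 s" "sum lam2 S2 = 1"
     "\<forall>w. interp T w p = (\<Sum>s\<in>S2. lam2 s * w s)" using bary[OF mesh, of p] pSt stsub by blast
  have "hat T z' p = (\<Sum>s\<in>S2. lam2 s * (if s = z' then 1 else 0))"
    unfolding hat_def using S2(5) by simp
  also have "\<dots> = (\<Sum>s\<in>S2. if s = z' then lam2 s else 0)" by (intro sum.cong) auto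
  also have "\<dots> = (if z' \<in> S2 then lam2 z' else 0)" using S2(2) by (simp add: sum.delta)
  finally have hz: "hat T z' p = (if z' \<in> S2 then lam2 z' else 0)" .
  hence z'S: "z' \<in> S2" "lam2 z' > 0" using v0(2) unfolding p_def[symmetric] by (auto split: if_splits)
  have "?Iu p - ?Iv p \<ge> M" using allp[OF pSt] uxv by simp
  hence sE: "\<forall>s\<in>S2. lam2 s > 0 \<longrightarrow> s \<in> E" using supp[OF S2] by blast
  hence z'E: "z' \<in> E" using z'S by blast
  have bd: "\<forall>s\<in>S2. lam2 s > 0 \<longrightarrow> u s \<le> Um" using sE uE by blast
  have "(\<Sum>s\<in>S2. lam2 s * u s) \<ge> Um" using allp[OF pSt] S2(5) xE(2) by simp
  hence "\<forall>s\<in>S2. lam2 s > 0 \<longrightarrow> u s = Um" using wavg_eq(2)[OF S2(2,3,4) bd] by blast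
  hence "u z' = Um" using z'S by blast
  hence "z' \<in> Es" using z'E unfolding Es_def by blast
  thus False using z' by blast
qed

lemma uniqueness:
  assumes su: "disc_obstacle_sol \<Omega> T \<epsilon> S\<theta> f obs g u" and sv: "disc_obstacle_sol \<Omega> T \<epsilon> S\<theta> f obs g v"
    and H: "(\<exists>c<0. \<forall>z\<in>IN. f z \<le> c) \<or> (\<exists>c>0. \<forall>z\<in>IN. f z \<ge> c) \<or> ((\<forall>z\<in>IN. f z = 0) \<and> cond_M1 \<Omega> T \<epsilon> S\<theta>)"
  shows "u = v"
proof -
  have both: "(\<forall>y\<in>nodes T. u y \<le> v y) \<and> (\<forall>y\<in>nodes T. v y \<le> u y)"
  proof (cases "\<exists>c<0. \<forall>z\<in>IN. f z \<le> c")
    case True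
    then obtain c where "c < 0" "\<forall>z\<in>IN. f z \<le> c" by blast
    thus ?thesis using uniq_neg[OF su sv] uniq_neg[OF sv su] by blast
  next
    case False
    show ?thesis
    proof (cases "\<exists>c>0. \<forall>z\<in>IN. f z \<ge> c")
      case True
      then obtain c where "c > 0" "\<forall>z\<in>IN. f z \<ge> c" by blast
      thus ?thesis using uniq_pos[OF su sv] uniq_pos[OF sv su] by blast
    next
      case False2: False
      hence "(\<forall>z\<in>IN. f z = 0) \<and> cond_M1 \<Omega> T \<epsilon> S\<theta>" using H False by blast
      thus ?thesis using uniq_zero[OF su sv] uniq_zero[OF sv su] by blast
    qed
  qed
  have "\<forall>y\<in>nodes T. u y = v y" using both by (meson order_antisym)
  thus ?thesis using P1_unique[OF mesh sol_props(1)[OF su] sol_props(1)[OF sv]] by blast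
qed


lemma bound:
  assumes sol: "disc_obstacle_sol \<Omega> T \<epsilon> S\<theta> f obs g u"
    and bO: "bounded \<Omega>" and neO: "\<Omega> \<noteq> {}"
    and fb: "\<forall>x\<in>\<Omega>. \<bar>f x\<bar> \<le> Bf" and ob: "\<forall>x\<in>\<Omega>. \<bar>obs x\<bar> \<le> Bo"
  shows "linf_norm (mesh_domain T) u
     \<le> ((diameter (closure \<Omega>))\<^sup>2 + 1) * linf_norm (mesh_domain T) f + linf_norm (mesh_domain T) obs
       + max_abs BN g"
proof -
  define Dm where "Dm = diameter (closure \<Omega>)"
  define Nf where "Nf = linf_norm (mesh_domain T) f"
  define No where "No = linf_norm (mesh_domain T) obs"
  define G where "G = max_abs BN g"
  have fbd: "\<forall>x\<in>mesh_domain T. \<bar>f x\<bar> \<le> Bf" using fb dom by blast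
  have obd: "\<forall>x\<in>mesh_domain T. \<bar>obs x\<bar> \<le> Bo" using ob dom by blast
  have finBN: "finite BN" using finN BN_nodes finite_subset by blast
  have Nf0: "Nf \<ge> 0" unfolding Nf_def by (rule linf_nonneg[OF fbd])
  have No0: "No \<ge> 0" unfolding No_def by (rule linf_nonneg[OF obd])
  have G0: "G \<ge> 0" unfolding G_def by (rule maxabs_nonneg[OF finBN])
  have fz: "f z \<le> Nf" if "z \<in> IN" for z
    using linf_ge[OF fbd IN_dom[OF that]] unfolding Nf_def by simp
  have oz: "\<bar>obs z\<bar> \<le> No" if "z \<in> IN" for z
    using linf_ge[OF obd IN_dom[OF that]] unfolding No_def by simp
  have gz: "\<bar>g z\<bar> \<le> G" if "z \<in> BN" for z
    using maxabs_ge[OF finBN that] unfolding G_def by simp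
  obtain x0 where x0: "x0 \<in> \<Omega>" using neO by blast
  have bc: "bounded (closure \<Omega>)" using bO by (simp add: bounded_closure)
  have dist_nodes: "norm (y - x0) \<le> Dm" if "y \<in> nodes T" for y
  proof -
    have "y \<in> closure \<Omega>" using nodes_in_closure[OF mesh dom] that by blast
    moreover have "x0 \<in> closure \<Omega>" using x0 closure_subset by blast
    ultimately have "dist y x0 \<le> Dm" unfolding Dm_def using diameter_bounded_bound[OF bc] by blast
    thus ?thesis by (simp add: dist_norm)
  qed
  have Dm0: "Dm \<ge> 0" unfolding Dm_def by (rule diameter_ge_0[OF bc])
  have upper_eta: "u y \<le> max G No + (Nf + \<eta>) * Dm\<^sup>2" if y: "y \<in> nodes T" and eta: "\<eta> > 0" for y \<eta>
  proof -
    define A where "A = Nf + \<eta>"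
    have A0: "A > 0" unfolding A_def using Nf0 eta by simp
    define q where "q y = 0 - A * (norm (y - x0))\<^sup>2" for y
    define R where "R = Max ((\<lambda>y. u y - q y) ` nodes T)"
    have fi: "finite ((\<lambda>y. u y - q y) ` nodes T)" using finN by simp
    have le: "\<forall>y\<in>nodes T. u y \<le> q y + R"
    proof
      fix y assume "y \<in> nodes T"
      hence "u y - q y \<le> R" unfolding R_def using Max_ge[OF fi] by blast
      thus "u y \<le> q y + R" by simp
    qed
    have "R \<in> (\<lambda>y. u y - q y) ` nodes T" unfolding R_def using Max_in[OF fi] y by blast
    then obtain zm where zm: "zm \<in> nodes T" "u zm - q zm = R" by (rule imageE) simp
    have uzm: "u zm \<le> max G No"
    proof (cases "zm \<in> IN")
      case False
      hence "zm \<in> BN" using nodes_split[OF zm(1)] by blast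
      hence "u zm = g zm" "\<bar>g zm\<bar> \<le> G" using sol_props(5)[OF sol] gz by auto
      thus ?thesis by simp
    next
      case True
      show ?thesis
      proof (rule ccontr)
        assume "\<not> u zm \<le> max G No"
        hence "u zm > obs zm" using oz[OF True] by simp
        hence Fu: "F u zm = f zm" using sol_props(4)[OF sol True] by blast
        have "F u zm \<ge> F q zm" by (rule mono_eq_at[OF True le]) (use zm(2) in simp)
        moreover have "F q zm \<ge> A" unfolding q_def
          by (rule barrier[OF mesh eps finS neS symS st_sub[OF True] zm(1)]) (use A0 in simp)
        moreover have "f zm \<le> Nf" using fz[OF True] .
        ultimately show False using Fu eta unfolding A_def by linarith
      qed
    qed
    have "u y \<le> q y + R" using le y by blast
    also have "\<dots> = u zm + A * ((norm (zm - x0))\<^sup>2 - (norm (y - x0))\<^sup>2)"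
      using zm(2) unfolding q_def by (simp add: algebra_simps)
    also have "\<dots> \<le> u zm + A * Dm\<^sup>2"
    proof -
      have "(norm (zm - x0))\<^sup>2 \<le> Dm\<^sup>2" using dist_nodes[OF zm(1)] by (simp add: power_mono)
      hence "(norm (zm - x0))\<^sup>2 - (norm (y - x0))\<^sup>2 \<le> Dm\<^sup>2"
        using zero_le_power2[of "norm (y - x0)"] by linarith
      thus ?thesis using A0 by (simp add: mult_left_mono)
    qed
    finally show ?thesis using uzm unfolding A_def by simp
  qed
  have upper: "u y \<le> max G No + Nf * Dm\<^sup>2" if y: "y \<in> nodes T" for y
  proof -
    have "\<forall>\<delta>. 0 < \<delta> \<and> \<delta> < 1 \<longrightarrow> u y \<le> (max G No + Nf * Dm\<^sup>2) + \<delta> * Dm\<^sup>2"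
    proof (intro allI impI)
      fix \<delta> :: real assume d: "0 < \<delta> \<and> \<delta> < 1"
      have "u y \<le> max G No + (Nf + \<delta>) * Dm\<^sup>2" using upper_eta[OF y] d by blast
      thus "u y \<le> (max G No + Nf * Dm\<^sup>2) + \<delta> * Dm\<^sup>2" by (simp add: algebra_simps)
    qed
    moreover have "Dm\<^sup>2 \<ge> 0" by simp
    ultimately show ?thesis using eps_limit by blast
  qed
  have lower: "u y \<ge> - max G No" if y: "y \<in> nodes T" for y
  proof (cases "y \<in> IN")
    case True
    thus ?thesis using sol_props(3)[OF sol True] oz[OF True] by simp
  next
    case False
    hence yb: "y \<in> BN" using nodes_split[OF y] by blast
    have "u y = g y" using sol_props(5)[OF sol yb] .
    moreover have "- g y \<le> G" using abs_le_D2[OF gz[OF yb]] .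
    ultimately show ?thesis by simp
  qed
  define Rt where "Rt = ((Dm)\<^sup>2 + 1) * Nf + No + G"
  have "max G No \<le> No + G" using No0 G0 by simp
  moreover have "Nf * Dm\<^sup>2 \<le> (Dm\<^sup>2 + 1) * Nf" using Nf0 by (simp add: algebra_simps)
  ultimately have absn: "\<bar>u y\<bar> \<le> Rt" if "y \<in> nodes T" for y
  proof -
    have "u y \<le> Rt" using upper[OF that] \<open>max G No \<le> No + G\<close> \<open>Nf * Dm\<^sup>2 \<le> (Dm\<^sup>2 + 1) * Nf\<close>
      unfolding Rt_def by linarith
    moreover have "- u y \<le> Rt"
    proof -
      have "(Dm\<^sup>2 + 1) * Nf \<ge> 0" using Nf0 by simp
      thus ?thesis using lower[OF that] \<open>max G No \<le> No + G\<close> unfolding Rt_def by linarith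
    qed
    ultimately show ?thesis by (simp add: abs_le_iff)
  qed
  have Rt0: "Rt \<ge> 0" unfolding Rt_def using Nf0 No0 G0 by simp
  have "\<forall>x\<in>mesh_domain T. \<bar>u x\<bar> \<le> Rt"
  proof
    fix x assume x: "x \<in> mesh_domain T"
    hence xm: "x \<in> mesh_union T" unfolding mesh_domain_def using interior_subset by blast
    obtain S lam where S: "S \<in> T" "finite S" "\<forall>s\<in>S. 0 \<le> lam s" "sum lam S = 1"
       "\<forall>w. interp T w x = (\<Sum>s\<in>S. lam s * w s)" using bary[OF mesh xm] by blast
    have "interp T u = u" using interp_P1_self[OF mesh sol_props(1)[OF sol]] .
    hence ux: "u x = (\<Sum>s\<in>S. lam s * u s)" using spec[OF S(5), of u] by simp
    have Sn: "S \<subseteq> nodes T" using S_sub_nodes[OF S(1)] .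
    have b0: "\<bar>u s\<bar> \<le> Rt" if "s \<in> S" for s using absn Sn that by blast
    have b1: "\<forall>s\<in>S. lam s > 0 \<longrightarrow> u s \<le> Rt" using b0 abs_le_D1 by blast
    have b2: "\<forall>s\<in>S. lam s > 0 \<longrightarrow> - u s \<le> Rt" using b0 abs_le_D2 by blast
    have "(\<Sum>s\<in>S. lam s * u s) \<le> Rt" using wavg_eq(1)[OF S(2,3,4) b1] .
    moreover have "(\<Sum>s\<in>S. lam s * (- u s)) \<le> Rt" using wavg_eq(1)[OF S(2,3,4) b2] .
    hence "- (\<Sum>s\<in>S. lam s * u s) \<le> Rt" by (simp add: sum_negf)
    ultimately show "\<bar>u x\<bar> \<le> Rt" using ux by simp
  qed
  hence "linf_norm (mesh_domain T) u \<le> Rt" using linf_le Rt0 by blast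
  thus ?thesis unfolding Rt_def Dm_def Nf_def No_def G_def by simp
qed

end

theorem lemma5p6:
  fixes \<Omega> :: "'a::euclidean_space set"
  assumes "open \<Omega>" and "connected \<Omega>" and "bounded \<Omega>" and "\<Omega> \<noteq> {}"
    and "continuous_boundary \<Omega>"
  shows "\<exists>C>0. \<forall>(f::'a \<Rightarrow> real) (g::'a \<Rightarrow> real) (gt::real \<Rightarrow> 'a \<Rightarrow> real) (obs::'a \<Rightarrow> real).
     \<comment> \<open>(RHS.1)\<close>
     (continuous_on \<Omega> f \<and> bounded (f ` \<Omega>)) \<longrightarrow>
     \<comment> \<open>(RHS.2)\<close>
     ((\<exists>c<0. \<forall>x\<in>\<Omega>. f x \<le> c) \<or> (\<exists>c>0. \<forall>x\<in>\<Omega>. f x \<ge> c) \<or> (\<forall>x\<in>\<Omega>. f x = 0)) \<longrightarrow>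
     \<comment> \<open>(BC.1)\<close>
     continuous_on (frontier \<Omega>) g \<longrightarrow>
     \<comment> \<open>(BC.2)\<close>
     (\<forall>\<epsilon>>0. continuous_on (closure \<Omega>) (gt \<epsilon>)) \<longrightarrow>
     (\<forall>\<alpha>. 0 \<le> \<alpha> \<and> \<alpha> \<le> 1 \<and> holder_on (frontier \<Omega>) \<alpha> g \<longrightarrow>
        (\<exists>Cg. \<forall>\<epsilon>>0. holder_on (closure \<Omega>) \<alpha> (gt \<epsilon>) \<and>
                     (\<forall>x\<in>frontier \<Omega>. \<bar>g x - gt \<epsilon> x\<bar> \<le> Cg * \<epsilon> powr \<alpha>))) \<longrightarrow>
     \<comment> \<open>(OBS.1)\<close>
     (continuous_on (closure \<Omega>) obs \<and> (\<forall>x\<in>frontier \<Omega>. obs x < g x)) \<longrightarrow>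
     (\<forall>\<T> h \<epsilon> \<theta> S\<theta>.
        is_mesh \<T> \<and> h = mesh_size \<T> \<and>
        inner_set \<Omega> h \<subseteq> mesh_domain \<T> \<and> mesh_domain \<T> \<subseteq> \<Omega> \<and>
        h \<le> \<epsilon> \<and> \<epsilon> \<le> diameter \<Omega> \<and> 0 < \<theta> \<and> \<theta> \<le> 1 \<and> stencil_dirs S\<theta> \<theta> \<and>
        \<comment> \<open>(M.1) in case (RHS.2b)\<close>
        ((\<forall>x\<in>\<Omega>. f x = 0) \<longrightarrow> cond_M1 \<Omega> \<T> \<epsilon> S\<theta>) \<longrightarrow>
        (\<exists>!u. disc_obstacle_sol \<Omega> \<T> \<epsilon> S\<theta> f obs (gt \<epsilon>) u) \<and>
        (\<forall>u. disc_obstacle_sol \<Omega> \<T> \<epsilon> S\<theta> f obs (gt \<epsilon>) u \<longrightarrow>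
           linf_norm (mesh_domain \<T>) u
             \<le> C * linf_norm (mesh_domain \<T>) f + linf_norm (mesh_domain \<T>) obs
               + max_abs (boundary_nodes \<Omega> \<T> \<epsilon>) (gt \<epsilon>)))"
proof -
  define C where "C = (diameter (closure \<Omega>))\<^sup>2 + 1"
  have Cpos: "C > 0" unfolding C_def by (simp add: add_nonneg_pos)
  show ?thesis
  proof (rule exI[of _ C], rule conjI[OF Cpos], intro allI impI)
    fix f :: "'a \<Rightarrow> real" and g :: "'a \<Rightarrow> real" and gt :: "real \<Rightarrow> 'a \<Rightarrow> real" and obs :: "'a \<Rightarrow> real"
      and T h \<epsilon> \<theta> S\<theta>
    assume A1: "continuous_on \<Omega> f \<and> bounded (f ` \<Omega>)"
      and A2: "(\<exists>c<0. \<forall>x\<in>\<Omega>. f x \<le> c) \<or> (\<exists>c>0. \<forall>x\<in>\<Omega>. f x \<ge> c) \<or> (\<forall>x\<in>\<Omega>. f x = 0)"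
      and A6: "continuous_on (closure \<Omega>) obs \<and> (\<forall>x\<in>frontier \<Omega>. obs x < g x)"
      and P: "is_mesh T \<and> h = mesh_size T \<and>
        inner_set \<Omega> h \<subseteq> mesh_domain T \<and> mesh_domain T \<subseteq> \<Omega> \<and>
        h \<le> \<epsilon> \<and> \<epsilon> \<le> diameter \<Omega> \<and> 0 < \<theta> \<and> \<theta> \<le> 1 \<and> stencil_dirs S\<theta> \<theta> \<and>
        ((\<forall>x\<in>\<Omega>. f x = 0) \<longrightarrow> cond_M1 \<Omega> T \<epsilon> S\<theta>)"
    interpret dsetup \<Omega> T h \<epsilon> \<theta> S\<theta>
      by (unfold_locales) (use P in blast)+
    have M1: "(\<forall>x\<in>\<Omega>. f x = 0) \<longrightarrow> cond_M1 \<Omega> T \<epsilon> S\<theta>" using P by blast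
    have H: "(\<exists>c<0. \<forall>z\<in>IN. f z \<le> c) \<or> (\<exists>c>0. \<forall>z\<in>IN. f z \<ge> c) \<or> ((\<forall>z\<in>IN. f z = 0) \<and> cond_M1 \<Omega> T \<epsilon> S\<theta>)"
    proof -
      have sub: "\<And>z. z \<in> IN \<Longrightarrow> z \<in> \<Omega>" by (rule IN_Omega)
      show ?thesis
      proof (cases "\<exists>c<0. \<forall>x\<in>\<Omega>. f x \<le> c")
        case True thus ?thesis using sub by blast
      next
        case F1: False
        show ?thesis
        proof (cases "\<exists>c>0. \<forall>x\<in>\<Omega>. f x \<ge> c")
          case True thus ?thesis using sub by blast
        next
          case False
          hence z: "\<forall>x\<in>\<Omega>. f x = 0" using A2 F1 by blast
          thus ?thesis using M1 sub by blast
        qed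
      qed
    qed
    have ex1: "\<exists>!u. disc_obstacle_sol \<Omega> T \<epsilon> S\<theta> f obs (gt \<epsilon>) u"
    proof (rule ex_ex1I)
      show "\<exists>u. disc_obstacle_sol \<Omega> T \<epsilon> S\<theta> f obs (gt \<epsilon>) u" by (rule existence)
      fix u v assume "disc_obstacle_sol \<Omega> T \<epsilon> S\<theta> f obs (gt \<epsilon>) u" "disc_obstacle_sol \<Omega> T \<epsilon> S\<theta> f obs (gt \<epsilon>) v"
      thus "u = v" using uniqueness H by blast
    qed
    obtain Bf where Bf: "\<forall>x\<in>\<Omega>. \<bar>f x\<bar> \<le> Bf"
    proof -
      have "bounded (f ` \<Omega>)" using A1 by blast
      then obtain a where "\<forall>y\<in>f ` \<Omega>. \<bar>y\<bar> \<le> a" unfolding bounded_real by blast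
      thus ?thesis using that by blast
    qed
    obtain Bo where Bo: "\<forall>x\<in>\<Omega>. \<bar>obs x\<bar> \<le> Bo"
    proof -
      have "compact (closure \<Omega>)" using assms(3) by simp
      hence "compact (obs ` closure \<Omega>)" using A6 compact_continuous_image by blast
      hence "bounded (obs ` closure \<Omega>)" by (rule compact_imp_bounded)
      then obtain a where a: "\<forall>y\<in>obs ` closure \<Omega>. \<bar>y\<bar> \<le> a" unfolding bounded_real by blast
      have "\<forall>x\<in>\<Omega>. \<bar>obs x\<bar> \<le> a"
      proof
        fix x assume "x \<in> \<Omega>"
        hence "x \<in> closure \<Omega>" using closure_subset by blast
        thus "\<bar>obs x\<bar> \<le> a" using a by blast
      qed
      thus ?thesis using that by blast
    qed
    have bnd: "\<forall>u. disc_obstacle_sol \<Omega> T \<epsilon> S\<theta> f obs (gt \<epsilon>) u \<longrightarrow>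
           linf_norm (mesh_domain T) u
             \<le> C * linf_norm (mesh_domain T) f + linf_norm (mesh_domain T) obs
               + max_abs (boundary_nodes \<Omega> T \<epsilon>) (gt \<epsilon>)"
    proof (intro allI impI)
      fix u assume "disc_obstacle_sol \<Omega> T \<epsilon> S\<theta> f obs (gt \<epsilon>) u"
      from bound[OF this assms(3) assms(4) Bf Bo]
      show "linf_norm (mesh_domain T) u
             \<le> C * linf_norm (mesh_domain T) f + linf_norm (mesh_domain T) obs
               + max_abs (boundary_nodes \<Omega> T \<epsilon>) (gt \<epsilon>)" unfolding C_def .
    qed
    show "(\<exists>!u. disc_obstacle_sol \<Omega> T \<epsilon> S\<theta> f obs (gt \<epsilon>) u) \<and>
        (\<forall>u. disc_obstacle_sol \<Omega> T \<epsilon> S\<theta> f obs (gt \<epsilon>) u \<longrightarrow>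
           linf_norm (mesh_domain T) u
             \<le> C * linf_norm (mesh_domain T) f + linf_norm (mesh_domain T) obs
               + max_abs (boundary_nodes \<Omega> T \<epsilon>) (gt \<epsilon>))"
      using ex1 bnd by blast
  qed
qed

end
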